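(* Let $r,l\ge 0$ be integers, let $\boldsymbol{\omega}=(\omega_1,\dots,\omega_r)$ and $\boldsymbol{\alpha}=(\alpha_1,\dots,\alpha_l)$ be tuples of complex numbers with positive real parts, let $a\in\mathbb{C}$ be fixed, and let $k\ge -(r+l)$ be an integer. Then, as $|w|\to\infty$ in any sector $|\arg w|\le \pi/2-\delta$ ($\delta>0$ fixed), $$P_{r+l}\big(k,w+a;(\boldsymbol{\omega},\boldsymbol{\alpha})\big)=\sum_{N=-l}^{r+k} a_{l,N}(a;\boldsymbol{\alpha})\,P_{r}(k-N,w;\boldsymbol{\omega})+O\!\left(\frac{1}{w}\right).$$
   Context: For a tuple $\boldsymbol{\omega}=(\omega_1,\dots,\omega_r)$ of complex numbers with positive real parts put $f_{\boldsymbol{\omega}}(t)=\prod_{j=1}^r(1-e^{-\omega_j t})^{-1}$ (for $r=0$, $\boldsymbol{\omega}=\emptyset$ and $f_\emptyset=1$). The multiple Bernoulli polynomials $a_{r,n}(w;\boldsymbol{\omega})$ ($n\in\mathbb{Z}$) are defined by the Laurent expansion at $t=0$ $$f_{\boldsymbol{\omega}}(t)e^{-wt}=\sum_{n\ge -r}a_{r,n}(w;\boldsymbol{\omega})t^n,$$ with $a_{r,n}=0$ for $n<-r$. Fix $0<\lambda<\min_i|2\pi/\omega_i|$ (any $\lambda>0$ if $r=0$). $I(\lambda,\infty)$ denotes the path consisting of the half-line from $+\infty$ to $\lambda$, the circle $|t|=\lambda$ traversed once in the positive sense, and the half-line from $\lambda$ to $+\infty$; along it $\log t$ is the branch with $\arg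 t=0$ on the incoming half-line, varying continuously along the circle, so $\arg t=2\pi$ on the outgoing half-line. For an integer $k$ and $\mathrm{Re}(w)>0$ define $$P_r(k,w;\boldsymbol{\omega})=\frac{1}{2\pi i}\int_{I(\lambda,\infty)}f_{\boldsymbol{\omega}}(t)e^{-wt}t^{-k-1}\log t\,dt+(\gamma-\pi i)\,a_{r,k}(w;\boldsymbol{\omega}),$$ where $\gamma$ is Euler's constant. $(\boldsymbol{\omega},\boldsymbol{\alpha})$ denotes the concatenated $(r+l)$-tuple. *)

theory Defs
  imports "HOL-Complex_Analysis.Complex_Analysis" "HOL-Library.Landau_Symbols"
begin

definition mb_f :: "complex list \<Rightarrow> complex \<Rightarrow> complex" where
  "mb_f \<omega>s t = (\<Prod>j<length \<omega>s. inverse (1 - exp (- (\<omega>s ! j) * t)))"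

definition mb_a :: "complex list \<Rightarrow> int \<Rightarrow> complex \<Rightarrow> complex" where
  "mb_a \<omega>s n w = fls_nth (laurent_expansion (\<lambda>t. mb_f \<omega>s t * exp (- w * t)) 0) n"

definition mb_F :: "complex list \<Rightarrow> int \<Rightarrow> complex \<Rightarrow> complex \<Rightarrow> complex" where
  "mb_F \<omega>s k w t = mb_f \<omega>s t * exp (- w * t) * t powi (- k - 1)"

text \<open>The contour integral over I(lambda,infinity) of F(t) log t, written piece by piece:
  incoming half-line from +infinity to lambda (arg t = 0),
  circle t = lambda e^{i theta}, theta from 0 to 2 pi (log t = ln lambda + i theta),
  outgoing half-line from lambda to +infinity (arg t = 2 pi).\<close>
definition mb_hankel_log :: "real \<Rightarrow> complex list \<Rightarrow> int \<Rightarrow> complex \<Rightarrow> complex" where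
  "mb_hankel_log lam \<omega>s k w =
     - integral {lam..} (\<lambda>x::real. mb_F \<omega>s k w (of_real x) * of_real (ln x))
     + integral {0..2*pi} (\<lambda>\<theta>::real.
          mb_F \<omega>s k w (of_real lam * exp (\<i> * of_real \<theta>))
          * (of_real (ln lam) + \<i> * of_real \<theta>)
          * (\<i> * of_real lam * exp (\<i> * of_real \<theta>)))
     + integral {lam..} (\<lambda>x::real. mb_F \<omega>s k w (of_real x) * (of_real (ln x) + 2 * pi * \<i>))"

definition mb_P :: "real \<Rightarrow> complex list \<Rightarrow> int \<Rightarrow> complex \<Rightarrow> complex" where
  "mb_P lam \<omega>s k w = mb_hankel_log lam \<omega>s k w / (2 * pi * \<i>)
      + (euler_mascheroni - pi * \<i>) * mb_a \<omega>s k w"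

definition admissible_radius :: "real \<Rightarrow> complex list \<Rightarrow> bool" where
  "admissible_radius lam \<omega>s \<longleftrightarrow> 0 < lam \<and> (\<forall>\<omega>\<in>set \<omega>s. lam < norm (2 * complex_of_real pi / \<omega>))"

definition sector :: "real \<Rightarrow> complex set" where
  "sector \<delta> = {w. w \<noteq> 0 \<and> \<bar>Arg w\<bar> \<le> pi / 2 - \<delta>}"

end

theory Submission
  imports Defs "HOL-Real_Asymp.Real_Asymp"
begin

definition fac :: "complex \<Rightarrow> complex fls" where
  "fac \<omega> = fps_to_fls (1 - fps_exp (-\<omega>))"

definition LE :: "complex list \<Rightarrow> complex fls" where
  "LE \<omega>s = (\<Prod>j<length \<omega>s. inverse (fac (\<omega>s ! j)))"

lemma mb_f_laurent: "mb_f \<omega>s has_laurent_expansion LE \<omega>s"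
  unfolding mb_f_def LE_def fac_def
  by (intro has_laurent_expansion_prod has_laurent_expansion_inverse has_laurent_expansion_fps
        fps_expansion_intros)

lemma factor_subdeg:
  fixes \<omega> :: complex
  assumes "\<omega> \<noteq> 0"
  shows "fls_subdegree (fac \<omega>) = 1" "fac \<omega> \<noteq> 0"
proof -
  have "subdegree (1 - fps_exp (-\<omega>)) = 1"
  proof (rule subdegreeI)
    show "(1 - fps_exp (-\<omega>)) $ 1 \<noteq> 0" using assms by (simp add: fps_exp_def)
    show "(1 - fps_exp (-\<omega>)) $ i = 0" if "i < 1" for i using that by (simp add: fps_exp_def)
  qed
  thus "fls_subdegree (fac \<omega>) = 1"
    unfolding fac_def by (simp only: fls_subdegree_fls_to_fps)
  thus "fac \<omega> \<noteq> 0" by auto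
qed

lemma LE_props:
  assumes "\<forall>\<omega>\<in>set \<omega>s. \<omega> \<noteq> 0"
  shows "LE \<omega>s \<noteq> 0" "fls_subdegree (LE \<omega>s) = - int (length \<omega>s)"
proof -
  have nz: "inverse (fac (\<omega>s ! j)) \<noteq> 0" if "j < length \<omega>s" for j
    using factor_subdeg(2)[of "\<omega>s ! j"] assms that by auto
  show "LE \<omega>s \<noteq> 0" unfolding LE_def using nz by (auto simp: prod_zero_iff)
  have "fls_subdegree (LE \<omega>s) = (\<Sum>j<length \<omega>s. fls_subdegree (inverse (fac (\<omega>s ! j))))"
    unfolding LE_def by (rule fls_subdegree_prod) (use nz in auto)
  also have "\<dots> = (\<Sum>j<length \<omega>s. -1)"
    by (intro sum.cong refl) (use factor_subdeg(1) assms in \<open>auto simp add: nth_mem\<close>)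
  finally show "fls_subdegree (LE \<omega>s) = - int (length \<omega>s)" by simp
qed

lemma prod_append_nth:
  "(\<Prod>j<length (xs @ ys). h ((xs @ ys) ! j)) = (\<Prod>j<length xs. h (xs ! j)) * (\<Prod>j<length ys. h (ys ! j))"
proof (induction ys rule: rev_induct)
  case (snoc y ys)
  have 1: "(\<Prod>j<length (xs @ ys @ [y]). h ((xs @ ys @ [y]) ! j))
      = (\<Prod>j<length (xs @ ys). h ((xs @ ys @ [y]) ! j)) * h y"
    by (simp add: nth_append)
  have 2: "(\<Prod>j<length (xs @ ys). h ((xs @ ys @ [y]) ! j)) = (\<Prod>j<length (xs @ ys). h ((xs @ ys) ! j))"
    by (intro prod.cong refl) (auto simp: nth_append)
  have 3: "(\<Prod>j<length (ys @ [y]). h ((ys @ [y]) ! j)) = (\<Prod>j<length ys. h ((ys @ [y]) ! j)) * h y"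
    by (simp add: nth_append)
  have 4: "(\<Prod>j<length ys. h ((ys @ [y]) ! j)) = (\<Prod>j<length ys. h (ys ! j))"
    by (intro prod.cong refl) (auto simp: nth_append)
  show ?case using snoc 1 2 3 4 by (simp add: mult_ac)
qed simp

lemma LE_append: "LE (xs @ ys) = LE xs * LE ys"
  unfolding LE_def by (rule prod_append_nth)

lemma mb_f_append: "mb_f (xs @ ys) t = mb_f xs t * mb_f ys t"
  unfolding mb_f_def by (rule prod_append_nth)

lemma mb_a_eq: "mb_a \<omega>s n w = fls_nth (LE \<omega>s * fps_to_fls (fps_exp (-w))) n"
proof -
  have "(\<lambda>t. mb_f \<omega>s t * exp (- w * t)) has_laurent_expansion LE \<omega>s * fps_to_fls (fps_exp (-w))"
    by (intro has_laurent_expansion_mult mb_f_laurent has_laurent_expansion_fps fps_expansion_intros)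
  thus ?thesis unfolding mb_a_def by (simp add: laurent_expansion_0_eqI)
qed

lemma conv:
  assumes "\<forall>\<omega>\<in>set \<omega>s. \<omega> \<noteq> 0" "\<forall>\<omega>\<in>set \<alpha>s. \<omega> \<noteq> 0"
  shows "mb_a (\<omega>s @ \<alpha>s) k (w + a) =
     (\<Sum>N\<in>{- int (length \<alpha>s) .. int (length \<omega>s) + k}. mb_a \<alpha>s N a * mb_a \<omega>s (k - N) w)"
proof -
  define A where "A = LE \<alpha>s * fps_to_fls (fps_exp (-a))"
  define B where "B = LE \<omega>s * fps_to_fls (fps_exp (-w))"
  have e: "fps_exp (-(w+a)) = fps_exp (-w) * fps_exp (-a)"
    by (simp add: fps_exp_add_mult[symmetric])
  have "mb_a (\<omega>s @ \<alpha>s) k (w + a) = fls_nth (A * B) k"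
    unfolding mb_a_eq A_def B_def LE_append e fls_times_fps_to_fls
    by (simp add: mult_ac)
  have sA: "fls_subdegree A = - int (length \<alpha>s)" and sB: "fls_subdegree B = - int (length \<omega>s)"
    unfolding A_def B_def using LE_props assms by (subst fls_subdegree_mult; simp add: fls_subdegree_fls_to_fps)+
  have "fls_nth (A * B) k = (\<Sum>i=fls_subdegree A..k - fls_subdegree B. fls_nth A i * fls_nth B (k - i))"
    by (rule fls_times_nth(2))
  also have "\<dots> = (\<Sum>N\<in>{- int (length \<alpha>s) .. int (length \<omega>s) + k}. mb_a \<alpha>s N a * mb_a \<omega>s (k - N) w)"
    unfolding sA sB by (simp add: add_ac mb_a_eq A_def B_def)
  finally show ?thesis using \<open>mb_a (\<omega>s @ \<alpha>s) k (w + a) = fls_nth (A * B) k\<close> by simp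
qed

definition Circ :: "real \<Rightarrow> (complex \<Rightarrow> complex) \<Rightarrow> complex" where
  "Circ lam \<phi> = integral {0..2*pi} (\<lambda>\<theta>::real.
          \<phi> (of_real lam * exp (\<i> * of_real \<theta>))
          * (of_real (ln lam) + \<i> * of_real \<theta>)
          * (\<i> * of_real lam * exp (\<i> * of_real \<theta>)))"

definition Hk :: "real \<Rightarrow> (complex \<Rightarrow> complex) \<Rightarrow> complex" where
  "Hk lam \<phi> = Circ lam \<phi> + 2 * pi * \<i> * integral {lam..} (\<lambda>x. \<phi> (of_real x))"

lemma circ_has_deriv:
  assumes holo: "\<phi> holomorphic_on S" and S: "open S" and lam: "0 < l1" "l1 \<le> l2"
    and ann: "\<And>t. l1 \<le> norm t \<Longrightarrow> norm t \<le> l2 \<Longrightarrow> t \<in> S" and x: "x \<in> {l1..l2}"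
  shows "((\<lambda>l. Circ l \<phi>) has_vector_derivative (2*pi*\<i>*\<phi> (of_real x))) (at x within {l1..l2})"
proof -
  define E where "E \<theta> = exp (\<i> * complex_of_real \<theta>)" for \<theta>
  define h where "h l \<theta> = \<phi> (of_real l * E \<theta>) * (of_real (ln l) + \<i> * of_real \<theta>) * (\<i> * of_real l * E \<theta>)" for l \<theta>
  define \<phi>' where "\<phi>' = deriv \<phi>"
  have dphi: "(\<phi> has_field_derivative \<phi>' z) (at z)" if "z \<in> S" for z
    unfolding \<phi>'_def using holo S that by (intro holomorphic_derivI) auto
  have holo': "\<phi>' holomorphic_on S" unfolding \<phi>'_def using holo S by (rule holomorphic_deriv)
  have cphi: "continuous_on S \<phi>" using holo holomorphic_on_imp_continuous_on by blast
  have cphi': "continuous_on S \<phi>'" using holo' holomorphic_on_imp_continuous_on by blast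
  have normE: "norm (E \<theta>) = 1" for \<theta> by (simp add: E_def)
  have inS: "of_real l * E \<theta> \<in> S" if "l \<in> {l1..l2}" for l \<theta>
    using that lam by (intro ann) (auto simp: norm_mult normE)
  define hx where "hx l \<theta> = \<phi>' (of_real l * E \<theta>) * E \<theta> * (of_real (ln l) + \<i> * of_real \<theta>) * (\<i> * of_real l * E \<theta>)
      + \<phi> (of_real l * E \<theta>) * (1 / of_real l) * (\<i> * of_real l * E \<theta>)
      + \<phi> (of_real l * E \<theta>) * (of_real (ln l) + \<i> * of_real \<theta>) * (\<i> * E \<theta>)" for l \<theta>
  have circ_eq: "Circ l \<phi> = integral (cbox 0 (2*pi)) (h l)" for l
    unfolding Circ_def h_def E_def by simp
  have dh: "((\<lambda>l. h l \<theta>) has_vector_derivative hx l \<theta>) (at l within {l1..l2})"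
    if l: "l \<in> {l1..l2}" for l \<theta>
  proof -
    define q where "q z = \<phi> (z * E \<theta>) * (Ln z + \<i> * of_real \<theta>) * (\<i> * z * E \<theta>)" for z
    have lpos: "l > 0" using l lam by auto
    have d1: "((\<lambda>z. \<phi> (z * E \<theta>)) has_field_derivative \<phi>' (of_real l * E \<theta>) * E \<theta>) (at (of_real l))"
      by (rule DERIV_chain2[where g="\<lambda>z. z * E \<theta>", OF dphi[OF inS[OF l, of \<theta>]]]) (auto intro!: derivative_eq_intros)
    have d2: "((\<lambda>z. Ln z + \<i> * of_real \<theta>) has_field_derivative inverse (of_real l)) (at (of_real l))"
      using lpos by (auto intro!: derivative_eq_intros has_field_derivative_Ln simp: complex_nonpos_Reals_iff)
    have d3: "((\<lambda>z. \<i> * z * E \<theta>) has_field_derivative \<i> * E \<theta>) (at (of_real l))"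
      by (auto intro!: derivative_eq_intros)
    have "(q has_field_derivative ((\<phi>' (of_real l * E \<theta>) * E \<theta>) * (Ln (of_real l) + \<i> * of_real \<theta>)
         + inverse (of_real l) * \<phi> (of_real l * E \<theta>)) * (\<i> * of_real l * E \<theta>)
         + (\<i> * E \<theta>) * (\<phi> (of_real l * E \<theta>) * (Ln (of_real l) + \<i> * of_real \<theta>))) (at (of_real l))"
      unfolding q_def by (rule DERIV_mult[OF DERIV_mult[OF d1 d2] d3])
    moreover have "((\<phi>' (of_real l * E \<theta>) * E \<theta>) * (Ln (of_real l) + \<i> * of_real \<theta>)
         + inverse (of_real l) * \<phi> (of_real l * E \<theta>)) * (\<i> * of_real l * E \<theta>)
         + (\<i> * E \<theta>) * (\<phi> (of_real l * E \<theta>) * (Ln (of_real l) + \<i> * of_real \<theta>)) = hx l \<theta>"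
    proof -
      have "of_real l \<noteq> (0::complex)" using lpos by simp
      thus ?thesis by (simp add: hx_def Ln_of_real[OF lpos]) (simp add: algebra_simps)
    qed
    ultimately have "(q has_field_derivative hx l \<theta>) (at (of_real l))" by simp
    hence "((\<lambda>x. q (of_real x)) has_vector_derivative hx l \<theta>) (at l within {l1..l2})"
      by (rule has_vector_derivative_real_field)
    thus ?thesis
      by (rule has_vector_derivative_transform[rotated 2]) (use l lam in \<open>auto simp: q_def h_def Ln_of_real\<close>)
  qed
  have cont_h: "continuous_on {0..2*pi} (h l)" if "l \<in> {l1..l2}" for l
  proof -
    have c1: "continuous_on {0..2*pi} (\<lambda>\<theta>. of_real l * E \<theta>)"
      unfolding E_def by (intro continuous_intros)
    have c2: "continuous_on {0..2*pi} (\<lambda>\<theta>. \<phi> (of_real l * E \<theta>))"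
      by (rule continuous_on_compose2[OF cphi c1]) (use inS[OF that] in auto)
    have c3: "continuous_on {0..2*pi} (\<lambda>\<theta>. E \<theta>)" unfolding E_def by (intro continuous_intros)
    have c4: "continuous_on {0..2*pi} (\<lambda>\<theta>. \<i> * complex_of_real \<theta>)" by (intro continuous_intros)
    show ?thesis unfolding h_def
      by (intro continuous_on_add continuous_on_mult continuous_on_const c2 c3 c4)
  qed
  have cont_hx: "continuous_on ({l1..l2} \<times> cbox 0 (2*pi)) (\<lambda>(l, \<theta>). hx l \<theta>)"
  proof -
    have sub: "(\<lambda>p. of_real (fst p) * E (snd p)) ` ({l1..l2} \<times> cbox 0 (2*pi)) \<subseteq> S"
      using inS by auto
    have c1: "continuous_on ({l1..l2} \<times> cbox 0 (2*pi)) (\<lambda>p. of_real (fst p) * E (snd p))"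
      unfolding E_def by (intro continuous_intros)
    have c2: "continuous_on ({l1..l2} \<times> cbox 0 (2*pi)) (\<lambda>p. \<phi> (of_real (fst p) * E (snd p)))"
      by (rule continuous_on_compose2[OF cphi c1 sub])
    have c3: "continuous_on ({l1..l2} \<times> cbox 0 (2*pi)) (\<lambda>p. \<phi>' (of_real (fst p) * E (snd p)))"
      by (rule continuous_on_compose2[OF cphi' c1 sub])
    have c4: "continuous_on ({l1..l2} \<times> cbox 0 (2*pi)) (\<lambda>p. of_real (ln (fst p)) :: complex)"
      by (intro continuous_intros continuous_on_of_real continuous_on_ln) (use lam in auto)
    have c5: "continuous_on ({l1..l2} \<times> cbox 0 (2*pi)) (\<lambda>p. E (snd p))"
      unfolding E_def by (intro continuous_intros)
    have c6: "continuous_on ({l1..l2} \<times> cbox 0 (2*pi)) (\<lambda>p. \<i> * complex_of_real (snd p))"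
      by (intro continuous_intros)
    have c7: "continuous_on ({l1..l2} \<times> cbox 0 (2*pi)) (\<lambda>p. complex_of_real (fst p))"
      by (intro continuous_intros)
    have c8: "continuous_on ({l1..l2} \<times> cbox 0 (2*pi)) (\<lambda>p. 1 / complex_of_real (fst p))"
      using lam by (intro continuous_intros) auto
    show ?thesis unfolding hx_def case_prod_unfold
      by (intro continuous_on_add continuous_on_mult continuous_on_const c2 c3 c4 c5 c6 c7 c8)
  qed
  have D: "((\<lambda>l. integral (cbox 0 (2*pi)) (h l)) has_vector_derivative integral (cbox 0 (2*pi)) (hx x))
      (at x within {l1..l2})"
    by (rule leibniz_rule_vector_derivative[OF dh _ cont_hx x])
       (auto intro!: integrable_continuous_interval cont_h)
  have I: "integral (cbox 0 (2*pi)) (hx x) = 2*pi*\<i>*\<phi> (of_real x)"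
  proof -
    define k where "k \<theta> = \<phi> (of_real x * E \<theta>) * (of_real (ln x) + \<i> * of_real \<theta>) * (of_real x * E \<theta>)" for \<theta>
    have xpos: "x > 0" using x lam by auto
    have dk: "(k has_vector_derivative (of_real x * hx x \<theta>)) (at \<theta> within {0..2*pi})" for \<theta>
    proof -
      define p where "p z = \<phi> (of_real x * exp (\<i> * z)) * (of_real (ln x) + \<i> * z) * (of_real x * exp (\<i> * z))" for z
      define e where "e = exp (\<i> * complex_of_real \<theta>)"
      have d0: "((\<lambda>z. of_real x * exp (\<i> * z)) has_field_derivative of_real x * (\<i> * e)) (at (of_real \<theta>))"
        by (auto intro!: derivative_eq_intros simp: e_def)
      have d1: "((\<lambda>z. \<phi> (of_real x * exp (\<i> * z))) has_field_derivative \<phi>' (of_real x * e) * (of_real x * (\<i> * e))) (at (of_real \<theta>))"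
        by (rule DERIV_chain2[OF _ d0]) (use dphi[OF inS[OF x, of \<theta>]] in \<open>simp add: E_def e_def\<close>)
      have d2: "((\<lambda>z. of_real (ln x) + \<i> * z) has_field_derivative \<i>) (at (of_real \<theta>))"
        by (auto intro!: derivative_eq_intros)
      have "(p has_field_derivative ((\<phi>' (of_real x * e) * (of_real x * (\<i> * e))) * (of_real (ln x) + \<i> * of_real \<theta>)
          + \<i> * \<phi> (of_real x * e)) * (of_real x * e)
          + (of_real x * (\<i> * e)) * (\<phi> (of_real x * e) * (of_real (ln x) + \<i> * of_real \<theta>))) (at (of_real \<theta>))"
        unfolding p_def using DERIV_mult[OF DERIV_mult[OF d1 d2] d0] by (simp add: e_def)
      moreover have "((\<phi>' (of_real x * e) * (of_real x * (\<i> * e))) * (of_real (ln x) + \<i> * of_real \<theta>)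
          + \<i> * \<phi> (of_real x * e)) * (of_real x * e)
          + (of_real x * (\<i> * e)) * (\<phi> (of_real x * e) * (of_real (ln x) + \<i> * of_real \<theta>)) = of_real x * hx x \<theta>"
        by (simp add: hx_def E_def e_def[symmetric]) (use xpos in \<open>simp add: algebra_simps\<close>)
      ultimately have "(p has_field_derivative (of_real x * hx x \<theta>)) (at (of_real \<theta>))" by simp
      hence "((\<lambda>t. p (of_real t)) has_vector_derivative (of_real x * hx x \<theta>)) (at \<theta> within {0..2*pi})"
        by (rule has_vector_derivative_real_field)
      thus ?thesis unfolding k_def[abs_def] by (simp add: p_def E_def)
    qed
    have "((\<lambda>\<theta>. of_real x * hx x \<theta>) has_integral (k (2*pi) - k 0)) {0..2*pi}"
      by (rule fundamental_theorem_of_calculus) (use dk in auto)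
    moreover have "k (2*pi) - k 0 = of_real x * (2*pi*\<i>*\<phi> (of_real x))"
    proof -
      have "E (2*pi) = 1" unfolding E_def using exp_two_pi_i by (simp add: mult_ac)
      moreover have "E 0 = 1" by (simp add: E_def)
      ultimately show ?thesis by (simp add: k_def algebra_simps)
    qed
    ultimately have "((\<lambda>\<theta>. of_real x * hx x \<theta>) has_integral of_real x * (2*pi*\<i>*\<phi> (of_real x))) {0..2*pi}"
      by simp
    hence "((\<lambda>\<theta>. inverse (of_real x) * (of_real x * hx x \<theta>)) has_integral
             inverse (of_real x) * (of_real x * (2*pi*\<i>*\<phi> (of_real x)))) {0..2*pi}"
      by (rule has_integral_mult_right)
    moreover have "(\<lambda>\<theta>. inverse (complex_of_real x) * (complex_of_real x * hx x \<theta>)) = hx x"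
      using xpos by (auto simp: field_simps)
    moreover have "inverse (complex_of_real x) * (complex_of_real x * (2*pi*\<i>*\<phi> (of_real x))) = 2*pi*\<i>*\<phi> (of_real x)"
      using xpos by (auto simp: field_simps)
    ultimately have "(hx x has_integral 2*pi*\<i>*\<phi> (of_real x)) {0..2*pi}"
      by metis
    thus ?thesis by (simp add: integral_unique)
  qed
  show ?thesis using D unfolding I circ_eq[abs_def] .
qed

lemma hankel_indep:
  assumes holo: "\<phi> holomorphic_on S" and S: "open S" and lam: "0 < l1" "l1 \<le> l2"
    and ann: "\<And>t. l1 \<le> norm t \<Longrightarrow> norm t \<le> l2 \<Longrightarrow> t \<in> S"
    and pos: "\<And>x. x > 0 \<Longrightarrow> complex_of_real x \<in> S"
    and int: "\<And>c. c > 0 \<Longrightarrow> (\<lambda>x. \<phi> (of_real x)) integrable_on {c..}"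
  shows "Hk l1 \<phi> = Hk l2 \<phi>"
proof -
  have F: "((\<lambda>x. 2*pi*\<i>*\<phi> (of_real x)) has_integral (Circ l2 \<phi> - Circ l1 \<phi>)) {l1..l2}"
    by (rule fundamental_theorem_of_calculus[OF lam(2)]) (rule circ_has_deriv[OF holo S lam ann])
  have "((\<lambda>x. \<phi> (of_real x)) has_integral (Circ l2 \<phi> - Circ l1 \<phi>) / (2*pi*\<i>)) {l1..l2}"
  proof -
    note has_integral_mult_right[OF F, of "inverse (2*pi*\<i>)"]
    moreover have "(\<lambda>x. inverse (2*pi*\<i>) * (2*pi*\<i>*\<phi> (of_real x))) = (\<lambda>x. \<phi> (of_real x))"
      by (auto simp: field_simps)
    moreover have "inverse (2*pi*\<i>) * (Circ l2 \<phi> - Circ l1 \<phi>) = (Circ l2 \<phi> - Circ l1 \<phi>) / (2*pi*\<i>)"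
      by (simp add: field_simps)
    ultimately show ?thesis by metis
  qed
  moreover have "((\<lambda>x. \<phi> (of_real x)) has_integral integral {l2..} (\<lambda>x. \<phi> (of_real x))) {l2..}"
    using int lam by auto
  ultimately have "((\<lambda>x. \<phi> (of_real x)) has_integral
     (Circ l2 \<phi> - Circ l1 \<phi>) / (2*pi*\<i>) + integral {l2..} (\<lambda>x. \<phi> (of_real x))) ({l1..l2} \<union> {l2..})"
    by (rule has_integral_Un) (use negligible_sing lam in \<open>auto simp: Int_atLeastAtMostR2 max_absorb2\<close>)
  moreover have "{l1..l2} \<union> {l2..} = {l1..}" using lam by auto
  ultimately have "integral {l1..} (\<lambda>x. \<phi> (of_real x)) =
     (Circ l2 \<phi> - Circ l1 \<phi>) / (2*pi*\<i>) + integral {l2..} (\<lambda>x. \<phi> (of_real x))"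
    by (simp add: integral_unique)
  thus ?thesis unfolding Hk_def by (simp add: field_simps)
qed

lemma circ_bound:
  assumes "0 < mu" and bd: "\<And>\<theta>. norm (\<phi> (of_real mu * exp (\<i> * of_real \<theta>))) \<le> M"
    and cont: "continuous_on {0..2*pi} (\<lambda>\<theta>. \<phi> (of_real mu * exp (\<i> * of_real \<theta>)))"
  shows "norm (Circ mu \<phi>) \<le> 2*pi * (M * ((\<bar>ln mu\<bar> + 2*pi) * mu))"
proof -
  have "norm (Circ mu \<phi>) \<le> integral {0..2*pi} (\<lambda>_. M * ((\<bar>ln mu\<bar> + 2*pi) * mu))"
    unfolding Circ_def
  proof (rule integral_norm_bound_integral)
    show "(\<lambda>\<theta>::real. \<phi> (of_real mu * exp (\<i> * of_real \<theta>)) * (of_real (ln mu) + \<i> * of_real \<theta>)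
          * (\<i> * of_real mu * exp (\<i> * of_real \<theta>))) integrable_on {0..2*pi}"
    proof -
      have c1: "continuous_on {0..2*pi} (\<lambda>\<theta>::real. complex_of_real (ln mu) + \<i> * complex_of_real \<theta>)"
        by (intro continuous_intros)
      have c2: "continuous_on {0..2*pi} (\<lambda>\<theta>::real. \<i> * complex_of_real mu * exp (\<i> * complex_of_real \<theta>))"
        by (intro continuous_intros)
      show ?thesis by (intro integrable_continuous_interval continuous_on_mult cont c1 c2)
    qed
    fix \<theta> :: real assume th: "\<theta> \<in> {0..2*pi}"
    have "norm (of_real (ln mu) + \<i> * of_real \<theta> :: complex) \<le> \<bar>ln mu\<bar> + 2*pi"
      using norm_triangle_ineq[of "of_real (ln mu) :: complex" "\<i> * of_real \<theta>"] th
      by (auto simp: norm_mult)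
    moreover have "norm (\<i> * of_real mu * exp (\<i> * of_real \<theta>)) = mu"
      using assms(1) by (simp add: norm_mult)
    ultimately show "norm (\<phi> (of_real mu * exp (\<i> * of_real \<theta>)) * (of_real (ln mu) + \<i> * of_real \<theta>)
          * (\<i> * of_real mu * exp (\<i> * of_real \<theta>))) \<le> M * ((\<bar>ln mu\<bar> + 2*pi) * mu)"
    proof -
      have "norm (\<phi> (of_real mu * exp (\<i> * of_real \<theta>))) * norm (of_real (ln mu) + \<i> * of_real \<theta> :: complex)
            \<le> M * (\<bar>ln mu\<bar> + 2*pi)"
        using bd[of \<theta>] \<open>norm (of_real (ln mu) + \<i> * of_real \<theta> :: complex) \<le> \<bar>ln mu\<bar> + 2*pi\<close>
        by (intro mult_mono) (auto intro: order.trans[OF norm_ge_zero])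
      hence "norm (\<phi> (of_real mu * exp (\<i> * of_real \<theta>))) * norm (of_real (ln mu) + \<i> * of_real \<theta> :: complex) * mu
            \<le> M * (\<bar>ln mu\<bar> + 2*pi) * mu"
        using assms(1) by (intro mult_right_mono) auto
      thus ?thesis unfolding norm_mult[of _ "\<i> * of_real mu * exp (\<i> * of_real \<theta>)"]
        using \<open>norm (\<i> * of_real mu * exp (\<i> * of_real \<theta>)) = mu\<close> by (simp add: norm_mult mult_ac)
    qed
  qed auto
  thus ?thesis by (simp add: mult_ac)
qed

lemma hankel_bound:
  assumes holo: "\<phi> holomorphic_on S" and S: "open S" and lam: "0 < lam"
    and ann: "\<And>t. 0 < norm t \<Longrightarrow> norm t \<le> lam \<Longrightarrow> t \<in> S"
    and pos: "\<And>x. x > 0 \<Longrightarrow> complex_of_real x \<in> S"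
    and int: "\<And>c. c > 0 \<Longrightarrow> (\<lambda>x. \<phi> (of_real x)) integrable_on {c..}"
    and eps: "\<epsilon> > 0" and bdd: "\<And>t. 0 < norm t \<Longrightarrow> norm t < \<epsilon> \<Longrightarrow> norm (\<phi> t) \<le> M"
    and B: "\<And>mu. 0 < mu \<Longrightarrow> mu \<le> lam \<Longrightarrow> norm (integral {mu..} (\<lambda>x. \<phi> (of_real x))) \<le> B"
  shows "norm (Hk lam \<phi>) \<le> 2*pi*B"
proof -
  have cphi: "continuous_on S \<phi>" using holo holomorphic_on_imp_continuous_on by blast
  have step: "norm (Hk lam \<phi>) \<le> 2*pi * (M * ((\<bar>ln mu\<bar> + 2*pi) * mu)) + 2*pi*B"
    if mu: "0 < mu" "mu < lam" "mu < \<epsilon>" for mu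
  proof -
    have "Hk mu \<phi> = Hk lam \<phi>"
    proof (rule hankel_indep[OF holo S])
      show "0 < mu" "mu \<le> lam" using mu by auto
      show "t \<in> S" if "mu \<le> norm t" "norm t \<le> lam" for t using that mu by (intro ann) auto
      show "complex_of_real x \<in> S" if "x > 0" for x using that by (rule pos)
      show "(\<lambda>x. \<phi> (of_real x)) integrable_on {c..}" if "c > 0" for c using that by (rule int)
    qed
    moreover have "norm (Circ mu \<phi>) \<le> 2*pi * (M * ((\<bar>ln mu\<bar> + 2*pi) * mu))"
    proof (rule circ_bound)
      show "0 < mu" by fact
      show "norm (\<phi> (of_real mu * exp (\<i> * of_real \<theta>))) \<le> M" for \<theta>
        by (rule bdd) (use mu in \<open>simp_all add: norm_mult\<close>)
      have c1: "continuous_on {0..2*pi} (\<lambda>\<theta>::real. of_real mu * exp (\<i> * complex_of_real \<theta>))"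
        by (intro continuous_intros)
      have "(\<lambda>\<theta>::real. of_real mu * exp (\<i> * complex_of_real \<theta>)) ` {0..2*pi} \<subseteq> S"
      proof
        fix t assume "t \<in> (\<lambda>\<theta>::real. of_real mu * exp (\<i> * complex_of_real \<theta>)) ` {0..2*pi}"
        then obtain \<theta> where "t = of_real mu * exp (\<i> * complex_of_real \<theta>)" by blast
        hence "norm t = mu" using mu by (simp add: norm_mult)
        thus "t \<in> S" using mu by (intro ann) auto
      qed
      thus "continuous_on {0..2*pi} (\<lambda>\<theta>. \<phi> (of_real mu * exp (\<i> * of_real \<theta>)))"
        by (rule continuous_on_compose2[OF cphi c1])
    qed
    moreover have "norm (2 * pi * \<i> * integral {mu..} (\<lambda>x. \<phi> (of_real x))) \<le> 2*pi*B"
    proof -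
      have "norm (2 * pi * \<i> * integral {mu..} (\<lambda>x. \<phi> (of_real x))) = 2*pi * norm (integral {mu..} (\<lambda>x. \<phi> (of_real x)))"
        by (simp add: norm_mult)
      also have "\<dots> \<le> 2*pi*B" using B[of mu] mu by simp
      finally show ?thesis .
    qed
    ultimately show ?thesis
      using norm_triangle_ineq[of "Circ mu \<phi>" "2 * pi * \<i> * integral {mu..} (\<lambda>x. \<phi> (of_real x))"]
      unfolding Hk_def by (smt (verit))
  qed
  have ev: "eventually (\<lambda>mu. norm (Hk lam \<phi>) \<le> 2*pi * (M * ((\<bar>ln mu\<bar> + 2*pi) * mu)) + 2*pi*B) (at_right 0)"
  proof -
    have "eventually (\<lambda>x. x \<in> {0<..<min lam \<epsilon>}) (at_right (0::real))"
      by (rule eventually_at_right_real) (use lam eps in simp)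
    then show ?thesis by (rule eventually_mono) (rule step; simp)
  qed
  have lim0: "((\<lambda>mu::real. (-ln mu + 2*pi) * mu) \<longlongrightarrow> 0) (at_right 0)"
    by real_asymp
  have ev2: "eventually (\<lambda>mu::real. (-ln mu + 2*pi) * mu = (\<bar>ln mu\<bar> + 2*pi) * mu) (at_right 0)"
  proof -
    have "eventually (\<lambda>x. x \<in> {0<..<1}) (at_right (0::real))"
      by (rule eventually_at_right_real) simp
    then show ?thesis
    proof (rule eventually_mono)
      fix x :: real assume "x \<in> {0<..<1}"
      hence "ln x < 0" by simp
      thus "(-ln x + 2*pi) * x = (\<bar>ln x\<bar> + 2*pi) * x" by simp
    qed
  qed
  have lim1: "((\<lambda>mu::real. (\<bar>ln mu\<bar> + 2*pi) * mu) \<longlongrightarrow> 0) (at_right 0)"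
    using tendsto_cong[OF ev2] lim0 by blast
  have lim: "((\<lambda>mu. 2*pi * (M * ((\<bar>ln mu\<bar> + 2*pi) * mu)) + 2*pi*B) \<longlongrightarrow> 2*pi * (M * 0) + 2*pi*B) (at_right 0)"
    by (intro tendsto_intros lim1)
  show ?thesis
    using tendsto_lowerbound[OF lim ev] by simp
qed

definition Sdom :: "complex list \<Rightarrow> complex set" where
  "Sdom \<omega>s = {t. t \<noteq> 0} \<inter> (\<Inter>\<omega>\<in>set \<omega>s. {t. exp (- \<omega> * t) \<noteq> 1})"

lemma open_Sdom: "open (Sdom \<omega>s)"
  unfolding Sdom_def
  by (intro open_Int open_INT finite_set ballI open_Collect_neq continuous_intros) 

lemma Sdom_mono: "set \<omega>s \<subseteq> set \<omega>s' \<Longrightarrow> Sdom \<omega>s' \<subseteq> Sdom \<omega>s"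
  unfolding Sdom_def by auto

lemma exp_ne_1_small:
  fixes \<omega> t :: complex
  assumes "\<omega> \<noteq> 0" "t \<noteq> 0" "norm t < norm (2 * complex_of_real pi / \<omega>)"
  shows "exp (- \<omega> * t) \<noteq> 1"
proof
  assume "exp (- \<omega> * t) = 1"
  then obtain n :: int where n: "Re (- \<omega> * t) = 0" "Im (- \<omega> * t) = of_int (2 * n) * pi"
    by (auto simp: exp_eq_1)
  have z: "- \<omega> * t = complex_of_real (of_int (2*n) * pi) * \<i>"
    using n by (simp add: complex_eq_iff)
  show False
  proof (cases "n = 0")
    case True
    thus False using z assms by simp
  next
    case False
    have "norm (- \<omega> * t) = norm (complex_of_real (of_int (2*n) * pi) * \<i>)" using z by simp
    also have "\<dots> = \<bar>of_int (2*n) * pi\<bar>" by (simp only: norm_mult norm_ii norm_of_real)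
    also have "\<dots> \<ge> 2 * pi" using False pi_gt_zero
    proof -
      have "\<bar>real_of_int n\<bar> \<ge> 1" using False by linarith
      thus ?thesis using pi_gt_zero by (simp add: abs_mult)
    qed
    finally have "norm \<omega> * norm t \<ge> 2 * pi" by (simp add: norm_mult)
    moreover have "norm \<omega> * norm t < norm \<omega> * norm (2 * complex_of_real pi / \<omega>)"
      using assms by simp
    moreover have "norm \<omega> * norm (2 * complex_of_real pi / \<omega>) = 2 * pi"
      using assms by (simp add: norm_divide norm_mult)
    ultimately show False by simp
  qed
qed

lemma exp_ne_1_pos:
  fixes \<omega> :: complex
  assumes "Re \<omega> > 0" "x > 0"
  shows "exp (- \<omega> * complex_of_real x) \<noteq> 1"
proof
  assume "exp (- \<omega> * complex_of_real x) = 1"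
  hence "Re (- \<omega> * complex_of_real x) = 0" by (simp add: exp_eq_1)
  thus False using assms by simp
qed

lemma pos_in_Sdom:
  assumes "\<forall>\<omega>\<in>set \<omega>s. 0 < Re \<omega>" "x > 0"
  shows "complex_of_real x \<in> Sdom \<omega>s"
  using assms exp_ne_1_pos unfolding Sdom_def by auto

lemma small_in_Sdom:
  assumes "\<forall>\<omega>\<in>set \<omega>s. 0 < Re \<omega>" "t \<noteq> 0"
    and "\<forall>\<omega>\<in>set \<omega>s. norm t < norm (2 * complex_of_real pi / \<omega>)"
  shows "t \<in> Sdom \<omega>s"
  unfolding Sdom_def using assms
proof (intro IntI CollectI INT_I)
  show "t \<noteq> 0" by fact
  fix \<omega> assume "\<omega> \<in> set \<omega>s"
  thus "exp (- \<omega> * t) \<noteq> 1" using assms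
  proof (intro exp_ne_1_small)
    show "\<omega> \<noteq> 0" using assms(1) \<open>\<omega> \<in> set \<omega>s\<close> by force
  qed (use assms \<open>\<omega> \<in> set \<omega>s\<close> in auto)
qed

lemma mb_f_holo: "set \<omega>s \<subseteq> set \<omega>s' \<Longrightarrow> mb_f \<omega>s holomorphic_on Sdom \<omega>s'"
  unfolding mb_f_def
  by (intro holomorphic_intros) (auto simp: Sdom_def nth_mem dest!: subsetD[of _ _ "\<omega>s ! _"])

lemma mb_F_holo: "set \<omega>s \<subseteq> set \<omega>s' \<Longrightarrow> mb_F \<omega>s k w holomorphic_on Sdom \<omega>s'"
  unfolding mb_F_def
  by (intro holomorphic_intros mb_f_holo) (auto simp: Sdom_def)

lemma mb_f_bound:
  assumes pos: "\<forall>\<omega>\<in>set \<omega>s. 0 < Re \<omega>" and mu: "mu > 0"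
  shows "\<exists>K. \<forall>x\<ge>mu. norm (mb_f \<omega>s (complex_of_real x)) \<le> K"
proof -
  define K where "K = (\<Prod>j<length \<omega>s. 1 / (1 - exp (- Re (\<omega>s ! j) * mu)))"
  have "norm (mb_f \<omega>s (complex_of_real x)) \<le> K" if x: "x \<ge> mu" for x
  proof -
    have "norm (mb_f \<omega>s (complex_of_real x)) = (\<Prod>j<length \<omega>s. norm (inverse (1 - exp (- (\<omega>s ! j) * complex_of_real x))))"
      unfolding mb_f_def by (simp add: prod_norm)
    also have "\<dots> \<le> K" unfolding K_def
    proof (rule prod_mono, safe)
      fix j assume "j < length \<omega>s"
      show "0 \<le> norm (inverse (1 - exp (- (\<omega>s ! j) * complex_of_real x)))" by simp
    next
      fix j assume j: "j < length \<omega>s"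
      define \<omega> where "\<omega> = \<omega>s ! j"
      have re: "Re \<omega> > 0" using pos j by (auto simp: \<omega>_def)
      have e1: "exp (- Re \<omega> * x) \<le> exp (- Re \<omega> * mu)" using re x by (simp add: mult_left_mono)
      have e2: "exp (- Re \<omega> * mu) < 1" using re mu by simp
      have "norm (exp (- \<omega> * complex_of_real x)) = exp (- Re \<omega> * x)" by (simp add: norm_exp_eq_Re)
      hence "norm (1 - exp (- \<omega> * complex_of_real x)) \<ge> 1 - exp (- Re \<omega> * x)"
        using norm_triangle_ineq2[of 1 "exp (- \<omega> * complex_of_real x)"] by (simp add: norm_minus_commute)
      hence ge: "norm (1 - exp (- \<omega> * complex_of_real x)) \<ge> 1 - exp (- Re \<omega> * mu)" using e1 by linarith
      have "norm (inverse (1 - exp (- \<omega> * complex_of_real x))) = 1 / norm (1 - exp (- \<omega> * complex_of_real x))"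
        by (simp add: norm_inverse divide_inverse)
      also have "\<dots> \<le> 1 / (1 - exp (- Re \<omega> * mu))"
        using ge e2 by (intro divide_left_mono mult_pos_pos) auto
      finally show "norm (inverse (1 - exp (- (\<omega>s ! j) * complex_of_real x))) \<le> 1 / (1 - exp (- Re (\<omega>s ! j) * mu))"
        by (simp add: \<omega>_def)
    qed
    finally show ?thesis .
  qed
  thus ?thesis by blast
qed

lemma powi_bound:
  assumes mu: "mu > 0"
  shows "\<exists>C. \<forall>x\<ge>mu. norm ((complex_of_real x) powi m) \<le> C * exp (of_int \<bar>m\<bar> * x)"
proof (cases "m \<ge> 0")
  case True
  have "norm ((complex_of_real x) powi m) \<le> 1 * exp (of_int \<bar>m\<bar> * x)" if "x \<ge> mu" for x
  proof -
    have "norm ((complex_of_real x) powi m) = x ^ nat m"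
      using True that mu by (simp add: power_int_def norm_power)
    also have "\<dots> \<le> exp x ^ nat m"
      using that mu by (intro power_mono) (auto intro: order.trans[OF _ exp_ge_add_one_self])
    also have "\<dots> = exp (of_int \<bar>m\<bar> * x)"
      using True by (simp add: exp_of_nat_mult[symmetric])
    finally show ?thesis by simp
  qed
  thus ?thesis by blast
next
  case False
  have "norm ((complex_of_real x) powi m) \<le> (inverse mu ^ nat (-m)) * exp (of_int \<bar>m\<bar> * x)" if "x \<ge> mu" for x
  proof -
    have "norm ((complex_of_real x) powi m) = inverse x ^ nat (-m)"
      using False that mu by (simp add: power_int_def norm_power norm_inverse)
    also have "\<dots> \<le> inverse mu ^ nat (-m)"
      using that mu by (intro power_mono) (auto simp: field_simps)
    also have "\<dots> \<le> inverse mu ^ nat (-m) * exp (of_int \<bar>m\<bar> * x)"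
      using that mu False by (intro mult_le_cancel_left1[THEN iffD2] impI) (auto simp: one_le_exp_iff intro: mult_nonpos_nonneg)
    finally show ?thesis .
  qed
  thus ?thesis by blast
qed

lemma int_exp_bound:
  fixes f :: "real \<Rightarrow> complex"
  assumes cont: "continuous_on {c..} f" and b: "b > 0"
    and bd: "\<And>x. x \<ge> c \<Longrightarrow> norm (f x) \<le> C * exp (-b*x)"
  shows "f integrable_on {c..}" "norm (integral {c..} f) \<le> C * exp (-b*c) / b"
proof -
  have g: "((\<lambda>x. C * exp (-b*x)) has_integral C * (exp (-b*c)/b)) {c..}"
    by (intro has_integral_mult_right has_integral_exp_minus_to_infinity b)
  have "f absolutely_integrable_on {c..}"
  proof (rule measurable_bounded_by_integrable_imp_absolutely_integrable)
    show "f \<in> borel_measurable (lebesgue_on {c..})"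
      by (rule continuous_imp_measurable_on_sets_lebesgue[OF cont]) auto
  qed (use g bd in \<open>auto simp: has_integral_integrable\<close>)
  thus fi: "f integrable_on {c..}" by (rule set_lebesgue_integral_eq_integral(1))
  have "norm (integral {c..} f) \<le> integral {c..} (\<lambda>x. C * exp (-b*x))"
    by (rule integral_norm_bound_integral[OF fi]) (use g bd in \<open>auto simp: has_integral_integrable\<close>)
  also have "\<dots> = C * exp (-b*c) / b" using integral_unique[OF g] by simp
  finally show "norm (integral {c..} f) \<le> C * exp (-b*c) / b" .
qed

lemma F_bound:
  assumes pos: "\<forall>\<omega>\<in>set \<omega>s. 0 < Re \<omega>" and mu: "mu > 0"
  shows "\<exists>C. \<forall>x\<ge>mu. \<forall>w. norm (mb_F \<omega>s k w (complex_of_real x)) \<le> C * exp (-(Re w - of_int \<bar>k+1\<bar>) * x)"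
proof -
  obtain K where K: "\<And>x. x \<ge> mu \<Longrightarrow> norm (mb_f \<omega>s (complex_of_real x)) \<le> K"
    using mb_f_bound[OF pos mu] by blast
  obtain C where C: "\<And>x. x \<ge> mu \<Longrightarrow> norm ((complex_of_real x) powi (-k-1)) \<le> C * exp (of_int \<bar>-k-1\<bar> * x)"
    using powi_bound[OF mu, of "-k-1"] by blast
  have K0: "K \<ge> 0" using K[of mu] by (auto intro: order.trans[OF norm_ge_zero])
  have "norm (mb_F \<omega>s k w (complex_of_real x)) \<le> (K * C) * exp (-(Re w - of_int \<bar>k+1\<bar>) * x)"
    if x: "x \<ge> mu" for x w
  proof -
    have "norm (mb_F \<omega>s k w (complex_of_real x)) =
        norm (mb_f \<omega>s (complex_of_real x)) * exp (- Re w * x) * norm ((complex_of_real x) powi (-k-1))"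
      unfolding mb_F_def by (simp add: norm_mult norm_exp_eq_Re)
    also have "\<dots> \<le> K * exp (- Re w * x) * (C * exp (of_int \<bar>-k-1\<bar> * x))"
      by (intro mult_mono K C x) (auto simp: K0)
    also have "\<dots> = (K * C) * exp (-(Re w - of_int \<bar>k+1\<bar>) * x)"
    proof -
      have "\<bar>-k-1\<bar> = \<bar>k+1\<bar>" by linarith
      thus ?thesis by (simp add: algebra_simps flip: exp_add)
    qed
    finally show ?thesis .
  qed
  thus ?thesis by blast
qed

lemma F_ln_bound:
  assumes pos: "\<forall>\<omega>\<in>set \<omega>s. 0 < Re \<omega>" and mu: "mu > 0"
  shows "\<exists>C. \<forall>x\<ge>mu. \<forall>w. norm (mb_F \<omega>s k w (complex_of_real x) * of_real (ln x)) \<le> C * exp (-(Re w - of_int \<bar>k+1\<bar> - 1) * x)"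
proof -
  obtain C where C: "\<And>x w. x \<ge> mu \<Longrightarrow> norm (mb_F \<omega>s k w (complex_of_real x)) \<le> C * exp (-(Re w - of_int \<bar>k+1\<bar>) * x)"
    using F_bound[OF pos mu, of k] by blast
  have C0: "C \<ge> 0" using C[of mu 0] by (smt (verit, best) exp_gt_zero norm_ge_zero zero_le_mult_iff)
  have "norm (mb_F \<omega>s k w (complex_of_real x) * of_real (ln x)) \<le> (C * (\<bar>ln mu\<bar> + 1)) * exp (-(Re w - of_int \<bar>k+1\<bar> - 1) * x)"
    if x: "x \<ge> mu" for x w
  proof -
    have xp: "x > 0" using x mu by simp
    have "ln x \<ge> ln mu" using x mu by simp
    moreover have "ln x \<le> x - 1" using xp by (rule ln_le_minus_one)
    moreover have "x \<le> exp x" using exp_ge_add_one_self[of x] by linarith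
    moreover have "1 \<le> exp x" using xp by simp
    ultimately have a: "\<bar>ln x\<bar> \<le> \<bar>ln mu\<bar> + exp x" by linarith
    have b: "\<bar>ln mu\<bar> \<le> \<bar>ln mu\<bar> * exp x" using \<open>1 \<le> exp x\<close>
      by (metis abs_ge_zero mult.right_neutral mult_left_mono)
    have l: "\<bar>ln x\<bar> \<le> (\<bar>ln mu\<bar> + 1) * exp x" using a b by (simp add: algebra_simps)
    have "norm (mb_F \<omega>s k w (complex_of_real x) * of_real (ln x)) = norm (mb_F \<omega>s k w (complex_of_real x)) * \<bar>ln x\<bar>"
      by (simp add: norm_mult)
    also have "\<dots> \<le> C * exp (-(Re w - of_int \<bar>k+1\<bar>) * x) * ((\<bar>ln mu\<bar> + 1) * exp x)"
      by (intro mult_mono C x l) (auto simp: C0)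
    also have "\<dots> = (C * (\<bar>ln mu\<bar> + 1)) * exp (-(Re w - of_int \<bar>k+1\<bar> - 1) * x)"
      by (simp add: algebra_simps flip: exp_add)
    finally show ?thesis .
  qed
  thus ?thesis by blast
qed

lemma F_cont:
  assumes pos: "\<forall>\<omega>\<in>set \<omega>s. 0 < Re \<omega>" and c: "c > 0"
  shows "continuous_on {c..} (\<lambda>x. mb_F \<omega>s k w (complex_of_real x))"
    "continuous_on {c..} (\<lambda>x. mb_F \<omega>s k w (complex_of_real x) * of_real (ln x))"
proof -
  have "continuous_on (Sdom \<omega>s) (mb_F \<omega>s k w)"
    using mb_F_holo[of \<omega>s \<omega>s k w] holomorphic_on_imp_continuous_on by blast
  moreover have "continuous_on {c..} (\<lambda>x::real. complex_of_real x)" by (intro continuous_intros)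
  moreover have "complex_of_real ` {c..} \<subseteq> Sdom \<omega>s" using pos c by (auto intro!: pos_in_Sdom)
  ultimately show 1: "continuous_on {c..} (\<lambda>x. mb_F \<omega>s k w (complex_of_real x))"
    by (rule continuous_on_compose2)
  have "continuous_on {c..} (\<lambda>x. complex_of_real (ln x))"
    using c by (intro continuous_intros) auto
  thus "continuous_on {c..} (\<lambda>x. mb_F \<omega>s k w (complex_of_real x) * of_real (ln x))"
    by (intro continuous_on_mult 1)
qed

lemma F_int:
  assumes pos: "\<forall>\<omega>\<in>set \<omega>s. 0 < Re \<omega>" and c: "c > 0" and w: "Re w > of_int \<bar>k+1\<bar> + 1"
  shows "(\<lambda>x. mb_F \<omega>s k w (complex_of_real x)) integrable_on {c..}"
    "(\<lambda>x. mb_F \<omega>s k w (complex_of_real x) * of_real (ln x)) integrable_on {c..}"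
proof -
  obtain C where C: "\<And>x w. x \<ge> c \<Longrightarrow> norm (mb_F \<omega>s k w (complex_of_real x)) \<le> C * exp (-(Re w - of_int \<bar>k+1\<bar>) * x)"
    using F_bound[OF pos c, of k] by blast
  show "(\<lambda>x. mb_F \<omega>s k w (complex_of_real x)) integrable_on {c..}"
    by (rule int_exp_bound(1)[OF F_cont(1)[OF pos c], where b="Re w - of_int \<bar>k+1\<bar>" and C=C])
       (use w C in auto)
  obtain C' where C': "\<And>x w. x \<ge> c \<Longrightarrow> norm (mb_F \<omega>s k w (complex_of_real x) * of_real (ln x)) \<le> C' * exp (-(Re w - of_int \<bar>k+1\<bar> - 1) * x)"
    using F_ln_bound[OF pos c, of k] by blast
  show "(\<lambda>x. mb_F \<omega>s k w (complex_of_real x) * of_real (ln x)) integrable_on {c..}"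
    by (rule int_exp_bound(1)[OF F_cont(2)[OF pos c], where b="Re w - of_int \<bar>k+1\<bar> - 1" and C=C'])
       (use w C' in auto)
qed

lemma mb_P_Hk:
  assumes pos: "\<forall>\<omega>\<in>set \<omega>s. 0 < Re \<omega>" and lam: "lam > 0" and w: "Re w > of_int \<bar>k+1\<bar> + 1"
  shows "mb_P lam \<omega>s k w = Hk lam (mb_F \<omega>s k w) / (2 * pi * \<i>) + (euler_mascheroni - pi * \<i>) * mb_a \<omega>s k w"
proof -
  note I = F_int[OF pos lam w]
  have "integral {lam..} (\<lambda>x. mb_F \<omega>s k w (complex_of_real x) * (of_real (ln x) + 2 * pi * \<i>))
      = integral {lam..} (\<lambda>x. mb_F \<omega>s k w (complex_of_real x) * of_real (ln x) + mb_F \<omega>s k w (complex_of_real x) * (2 * pi * \<i>))"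
    by (simp add: algebra_simps)
  also have "\<dots> = integral {lam..} (\<lambda>x. mb_F \<omega>s k w (complex_of_real x) * of_real (ln x))
       + integral {lam..} (\<lambda>x. mb_F \<omega>s k w (complex_of_real x)) * (2 * pi * \<i>)"
    by (subst integral_add) (use I in \<open>auto intro: integrable_on_mult_left\<close>)
  finally have "mb_hankel_log lam \<omega>s k w = Hk lam (mb_F \<omega>s k w)"
    unfolding mb_hankel_log_def Hk_def Circ_def by (simp add: algebra_simps)
  thus ?thesis unfolding mb_P_def by simp
qed

definition Nset :: "complex list \<Rightarrow> complex list \<Rightarrow> int \<Rightarrow> int set" where
  "Nset \<omega>s \<alpha>s k = {- int (length \<alpha>s) .. int (length \<omega>s) + k}"

definition Psi :: "complex list \<Rightarrow> complex list \<Rightarrow> int \<Rightarrow> complex \<Rightarrow> complex \<Rightarrow> complex" where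
  "Psi \<omega>s \<alpha>s k a t = mb_f \<omega>s t * t powi (-k-1) *
     (mb_f \<alpha>s t * exp (- a * t) - (\<Sum>N\<in>Nset \<omega>s \<alpha>s k. mb_a \<alpha>s N a * t powi N))"

definition psi :: "complex list \<Rightarrow> complex list \<Rightarrow> int \<Rightarrow> complex \<Rightarrow> complex \<Rightarrow> complex \<Rightarrow> complex" where
  "psi \<omega>s \<alpha>s k a w t = mb_F (\<omega>s @ \<alpha>s) k (w + a) t
     - (\<Sum>N\<in>Nset \<omega>s \<alpha>s k. mb_a \<alpha>s N a * mb_F \<omega>s (k - N) w t)"

lemma psi_eq:
  assumes "t \<noteq> 0"
  shows "psi \<omega>s \<alpha>s k a w t = exp (- w * t) * Psi \<omega>s \<alpha>s k a t"
proof -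
  have p: "t powi (- (k - N) - 1) = t powi (-k-1) * t powi N" for N
  proof -
    have "t powi (- (k - N) - 1) = t powi ((-k-1) + N)" by (rule arg_cong[of _ _ "\<lambda>m. t powi m"]) simp
    also have "\<dots> = t powi (-k-1) * t powi N" using assms by (rule power_int_add[OF disjI1])
    finally show ?thesis .
  qed
  have e: "exp (- (w + a) * t) = exp (- w * t) * exp (- a * t)"
    by (simp add: algebra_simps flip: exp_add)
  show ?thesis
    unfolding psi_def Psi_def mb_F_def mb_f_append p e
    by (simp add: algebra_simps sum_distrib_left sum_distrib_right sum_subtractf)
qed

lemma LE_exp_props:
  assumes "\<forall>\<omega>\<in>set \<omega>s. \<omega> \<noteq> 0"
  shows "LE \<omega>s * fps_to_fls (fps_exp c) \<noteq> 0"
    "fls_subdegree (LE \<omega>s * fps_to_fls (fps_exp c)) = - int (length \<omega>s)"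
  using LE_props[OF assms] by (auto simp: fls_subdegree_fls_to_fps)

lemma Psi_tendsto:
  assumes "\<forall>\<omega>\<in>set \<omega>s. \<omega> \<noteq> 0" "\<forall>\<omega>\<in>set \<alpha>s. \<omega> \<noteq> 0"
  shows "\<exists>L. (Psi \<omega>s \<alpha>s k a \<longlongrightarrow> L) (at 0)"
proof -
  define A where "A = LE \<alpha>s * fps_to_fls (fps_exp (-a))"
  define D where "D = A - (\<Sum>N\<in>Nset \<omega>s \<alpha>s k. fls_const (mb_a \<alpha>s N a) * fls_X_intpow N)"
  define T where "T = LE \<omega>s * fls_X_intpow (-k-1) * D"
  have exp: "Psi \<omega>s \<alpha>s k a has_laurent_expansion T"
  proof -
    have "(\<lambda>t. mb_f \<omega>s t * t powi (-k-1) *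
     (mb_f \<alpha>s t * exp (- a * t) - (\<Sum>N\<in>Nset \<omega>s \<alpha>s k. mb_a \<alpha>s N a * t powi N))) has_laurent_expansion T"
      unfolding T_def D_def A_def
      by (intro has_laurent_expansion_mult has_laurent_expansion_diff has_laurent_expansion_sum
            has_laurent_expansion_cmult_left mb_f_laurent has_laurent_expansion_fps fps_expansion_intros
            has_laurent_expansion_fps_X_power_int)
    thus ?thesis by (simp add: Psi_def[abs_def])
  qed
  have sA: "fls_subdegree A = - int (length \<alpha>s)"
    unfolding A_def by (rule LE_exp_props(2)[OF assms(2)])
  have Dn: "fls_nth D n = 0" if "n < int (length \<omega>s) + k + 1" for n
  proof -
    have s: "fls_nth (\<Sum>N\<in>Nset \<omega>s \<alpha>s k. fls_const (mb_a \<alpha>s N a) * fls_X_intpow N) n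
        = (\<Sum>N\<in>Nset \<omega>s \<alpha>s k. if n = N then mb_a \<alpha>s N a else 0)"
      by (simp add: fls_nth_sum) (intro sum.cong refl; simp)
    also have "\<dots> = (if n \<in> Nset \<omega>s \<alpha>s k then mb_a \<alpha>s n a else 0)"
      by (simp add: Nset_def)
    finally have s': "fls_nth (\<Sum>N\<in>Nset \<omega>s \<alpha>s k. fls_const (mb_a \<alpha>s N a) * fls_X_intpow N) n
        = (if n \<in> Nset \<omega>s \<alpha>s k then mb_a \<alpha>s n a else 0)" .
    show ?thesis
    proof (cases "n \<in> Nset \<omega>s \<alpha>s k")
      case True
      thus ?thesis unfolding D_def using s' by (simp add: A_def mb_a_eq)
    next
      case False
      hence "n < - int (length \<alpha>s)" using that by (auto simp: Nset_def)
      hence "fls_nth A n = 0" using sA by simp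
      thus ?thesis unfolding D_def using s' False by simp
    qed
  qed
  have sT: "fls_subdegree T \<ge> 0"
  proof (cases "D = 0")
    case True thus ?thesis by (simp add: T_def)
  next
    case False
    have "fls_subdegree D \<ge> int (length \<omega>s) + k + 1"
      by (rule fls_subdegree_geI[OF False]) (use Dn in auto)
    moreover have "LE \<omega>s \<noteq> 0" "fls_subdegree (LE \<omega>s) = - int (length \<omega>s)"
      using LE_props[OF assms(1)] by auto
    moreover have "fls_subdegree (LE \<omega>s * fls_X_intpow (-k-1) * D) =
        fls_subdegree (LE \<omega>s) + fls_subdegree (fls_X_intpow (-k-1) :: complex fls) + fls_subdegree D"
    proof -
      have x: "(fls_X_intpow (-k-1) :: complex fls) \<noteq> 0" by (rule fls_X_intpow_nonzero)
      have nz1: "LE \<omega>s * fls_X_intpow (-k-1) \<noteq> 0" using x \<open>LE \<omega>s \<noteq> 0\<close> by (simp only: mult_eq_0_iff) simp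
      show ?thesis using fls_subdegree_mult[OF nz1 False] fls_subdegree_mult[OF \<open>LE \<omega>s \<noteq> 0\<close> x] by simp
    qed
    ultimately show ?thesis unfolding T_def by simp
  qed
  show ?thesis using has_laurent_expansion_imp_tendsto_0[OF exp sT] by blast
qed

lemma exp_le_exp_mult: "a \<le> b \<Longrightarrow> (x::real) \<ge> 0 \<Longrightarrow> exp (a * x) \<le> exp (b * x)"
  by (simp add: mult_right_mono)

lemma Psi_real_bound:
  assumes pw: "\<forall>\<omega>\<in>set \<omega>s. 0 < Re \<omega>" and pa: "\<forall>\<omega>\<in>set \<alpha>s. 0 < Re \<omega>"
  shows "\<exists>M c. c \<ge> 0 \<and> (\<forall>x>0. norm (Psi \<omega>s \<alpha>s k a (complex_of_real x)) \<le> M * exp (c * x))"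
proof -
  have nz: "\<forall>\<omega>\<in>set \<omega>s. \<omega> \<noteq> 0" "\<forall>\<omega>\<in>set \<alpha>s. \<omega> \<noteq> 0" using pw pa by force+
  obtain L where L: "(Psi \<omega>s \<alpha>s k a \<longlongrightarrow> L) (at 0)" using Psi_tendsto[OF nz] by blast
  have "eventually (\<lambda>t. dist (Psi \<omega>s \<alpha>s k a t) L < 1) (at 0)"
    using L by (rule tendstoD) simp
  then obtain d where d: "d > 0" and dP: "\<And>t. t \<noteq> 0 \<Longrightarrow> dist t 0 < d \<Longrightarrow> dist (Psi \<omega>s \<alpha>s k a t) L < 1"
    unfolding eventually_at by blast
  have near: "norm (Psi \<omega>s \<alpha>s k a t) \<le> norm L + 1" if "t \<noteq> 0" "norm t < d" for t
    using dP[of t] that norm_triangle_ineq2[of "Psi \<omega>s \<alpha>s k a t" L] by (simp add: dist_norm)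
  define mu where "mu = d / 2"
  have mu: "mu > 0" "mu < d" using d by (auto simp: mu_def)
  obtain K1 where K1: "\<And>x. x \<ge> mu \<Longrightarrow> norm (mb_f \<omega>s (complex_of_real x)) \<le> K1"
    using mb_f_bound[OF pw mu(1)] by blast
  obtain K2 where K2: "\<And>x. x \<ge> mu \<Longrightarrow> norm (mb_f \<alpha>s (complex_of_real x)) \<le> K2"
    using mb_f_bound[OF pa mu(1)] by blast
  obtain C1 where C1: "\<And>x. x \<ge> mu \<Longrightarrow> norm ((complex_of_real x) powi (-k-1)) \<le> C1 * exp (of_int \<bar>-k-1\<bar> * x)"
    using powi_bound[OF mu(1), of "-k-1"] by blast
  have "\<forall>N. \<exists>C. \<forall>x\<ge>mu. norm ((complex_of_real x) powi N) \<le> C * exp (of_int \<bar>N\<bar> * x)"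
    using powi_bound[OF mu(1)] by blast
  then obtain CN where CN: "\<And>N x. x \<ge> mu \<Longrightarrow> norm ((complex_of_real x) powi N) \<le> CN N * exp (of_int \<bar>N\<bar> * x)"
    by metis
  define R :: real where "R = of_int (int (length \<alpha>s) + int (length \<omega>s) + \<bar>k\<bar>)"
  have R: "of_int \<bar>N\<bar> \<le> R" if "N \<in> Nset \<omega>s \<alpha>s k" for N
    using that unfolding R_def Nset_def by auto
  define P where "P = (\<Sum>N\<in>Nset \<omega>s \<alpha>s k. norm (mb_a \<alpha>s N a) * \<bar>CN N\<bar>)"
  define c where "c = of_int \<bar>k+1\<bar> + norm a + R"
  have R0: "R \<ge> 0" by (simp add: R_def)
  have K10: "K1 \<ge> 0" using K1[of mu] by (auto intro: order.trans[OF norm_ge_zero])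
  have K20: "K2 \<ge> 0" using K2[of mu] by (auto intro: order.trans[OF norm_ge_zero])
  have P0: "P \<ge> 0" unfolding P_def by (intro sum_nonneg) auto
  define M where "M = max (norm L + 1) (K1 * \<bar>C1\<bar> * (K2 + P))"
  have far: "norm (Psi \<omega>s \<alpha>s k a (complex_of_real x)) \<le> (K1 * \<bar>C1\<bar> * (K2 + P)) * exp (c * x)"
    if x: "x \<ge> mu" for x
  proof -
    have x0: "x \<ge> 0" using x mu by simp
    have "norm (\<Sum>N\<in>Nset \<omega>s \<alpha>s k. mb_a \<alpha>s N a * complex_of_real x powi N)
        \<le> (\<Sum>N\<in>Nset \<omega>s \<alpha>s k. norm (mb_a \<alpha>s N a) * (\<bar>CN N\<bar> * exp (R * x)))"
    proof (rule order.trans[OF norm_sum sum_mono])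
      fix N assume N: "N \<in> Nset \<omega>s \<alpha>s k"
      have "norm (complex_of_real x powi N) \<le> CN N * exp (of_int \<bar>N\<bar> * x)" by (rule CN[OF x])
      also have "\<dots> \<le> \<bar>CN N\<bar> * exp (R * x)"
        by (intro mult_mono exp_le_exp_mult R N x0) auto
      finally show "norm (mb_a \<alpha>s N a * complex_of_real x powi N) \<le> norm (mb_a \<alpha>s N a) * (\<bar>CN N\<bar> * exp (R * x))"
        unfolding norm_mult by (intro mult_left_mono) auto
    qed
    also have "\<dots> = P * exp (R * x)" unfolding P_def sum_distrib_right by (intro sum.cong refl) (simp add: mult_ac)
    finally have poly: "norm (\<Sum>N\<in>Nset \<omega>s \<alpha>s k. mb_a \<alpha>s N a * complex_of_real x powi N) \<le> P * exp (R * x)" .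
    have "norm (exp (- a * complex_of_real x)) = exp (- Re a * x)" by (simp add: norm_exp_eq_Re)
    also have "\<dots> \<le> exp (norm a * x)"
      using abs_Re_le_cmod[of a] x0 by (intro exp_le_exp_mult) auto
    finally have ea: "norm (exp (- a * complex_of_real x)) \<le> exp (norm a * x)" .
    have "norm (mb_f \<alpha>s (complex_of_real x) * exp (- a * complex_of_real x)) \<le> K2 * exp (norm a * x)"
      unfolding norm_mult by (intro mult_mono K2 x ea) (auto simp: K20)
    also have "\<dots> \<le> K2 * exp ((norm a + R) * x)"
      using R0 x0 K20 by (intro mult_left_mono exp_le_exp_mult) auto
    finally have t1: "norm (mb_f \<alpha>s (complex_of_real x) * exp (- a * complex_of_real x)) \<le> K2 * exp ((norm a + R) * x)" .
    have t2: "P * exp (R * x) \<le> P * exp ((norm a + R) * x)"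
      using P0 x0 by (intro mult_left_mono exp_le_exp_mult) auto
    have diff: "norm (mb_f \<alpha>s (complex_of_real x) * exp (- a * complex_of_real x) -
        (\<Sum>N\<in>Nset \<omega>s \<alpha>s k. mb_a \<alpha>s N a * complex_of_real x powi N)) \<le> (K2 + P) * exp ((norm a + R) * x)"
      using norm_triangle_ineq4[of "mb_f \<alpha>s (complex_of_real x) * exp (- a * complex_of_real x)"
          "\<Sum>N\<in>Nset \<omega>s \<alpha>s k. mb_a \<alpha>s N a * complex_of_real x powi N"] t1 t2 poly
      by (simp add: algebra_simps)
    have c1: "norm ((complex_of_real x) powi (-k-1)) \<le> \<bar>C1\<bar> * exp (of_int \<bar>k+1\<bar> * x)"
    proof -
      have "\<bar>-k-1\<bar> = \<bar>k+1\<bar>" by linarith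
      hence "norm ((complex_of_real x) powi (-k-1)) \<le> C1 * exp (of_int \<bar>k+1\<bar> * x)" using C1[OF x] by simp
      also have "\<dots> \<le> \<bar>C1\<bar> * exp (of_int \<bar>k+1\<bar> * x)" by (intro mult_right_mono) auto
      finally show ?thesis .
    qed
    have "norm (Psi \<omega>s \<alpha>s k a (complex_of_real x)) \<le> K1 * (\<bar>C1\<bar> * exp (of_int \<bar>k+1\<bar> * x)) * ((K2 + P) * exp ((norm a + R) * x))"
      unfolding Psi_def norm_mult
      by (intro mult_mono K1 x c1 diff) (auto simp: K10 K20 P0)
    also have "\<dots> = (K1 * \<bar>C1\<bar> * (K2 + P)) * exp (c * x)"
      by (simp add: c_def algebra_simps flip: exp_add)
    finally show ?thesis .
  qed
  have c0: "c \<ge> 0" using R0 by (simp add: c_def)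
  have "norm (Psi \<omega>s \<alpha>s k a (complex_of_real x)) \<le> M * exp (c * x)" if x: "x > 0" for x
  proof (cases "x < d")
    case True
    have "norm (Psi \<omega>s \<alpha>s k a (complex_of_real x)) \<le> norm L + 1" using near[of "complex_of_real x"] x True by simp
    also have "\<dots> \<le> M" by (simp add: M_def)
    also have "\<dots> \<le> M * exp (c * x)"
    proof -
      have "M \<ge> 0" unfolding M_def by (simp add: le_max_iff_disj)
      moreover have "exp (c * x) \<ge> 1" using c0 x by simp
      ultimately show ?thesis by (metis mult.right_neutral mult_left_mono)
    qed
    finally show ?thesis .
  next
    case False
    hence "x \<ge> mu" using mu by simp
    hence "norm (Psi \<omega>s \<alpha>s k a (complex_of_real x)) \<le> (K1 * \<bar>C1\<bar> * (K2 + P)) * exp (c * x)" by (rule far)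
    also have "\<dots> \<le> M * exp (c * x)" by (intro mult_right_mono) (auto simp: M_def)
    finally show ?thesis .
  qed
  thus ?thesis using c0 by blast
qed

lemma integral_lin:
  fixes u :: "real \<Rightarrow> complex"
  assumes "finite A" "u integrable_on T" "\<And>N. N \<in> A \<Longrightarrow> v N integrable_on T"
  shows "integral T (\<lambda>x. u x - (\<Sum>N\<in>A. c N * v N x)) = integral T u - (\<Sum>N\<in>A. c N * integral T (v N))"
proof -
  have "integral T (\<lambda>x. u x - (\<Sum>N\<in>A. c N * v N x)) = integral T u - integral T (\<lambda>x. \<Sum>N\<in>A. c N * v N x)"
    using assms by (intro integral_diff integrable_sum integrable_on_mult_right) auto
  also have "integral T (\<lambda>x. \<Sum>N\<in>A. c N * v N x) = (\<Sum>N\<in>A. integral T (\<lambda>x. c N * v N x))"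
    using assms by (intro integral_sum integrable_on_mult_right) auto
  finally show ?thesis by simp
qed

lemma Hk_lin:
  assumes A: "finite A" and lam: "lam > 0"
    and cf: "continuous_on S f" and cg: "\<And>N. N \<in> A \<Longrightarrow> continuous_on S (g N)"
    and circ: "\<And>t. norm t = lam \<Longrightarrow> t \<in> S"
    and intf: "(\<lambda>x. f (of_real x)) integrable_on {lam..}"
    and intg: "\<And>N. N \<in> A \<Longrightarrow> (\<lambda>x. g N (of_real x)) integrable_on {lam..}"
  shows "Hk lam (\<lambda>t. f t - (\<Sum>N\<in>A. c N * g N t)) = Hk lam f - (\<Sum>N\<in>A. c N * Hk lam (g N))"
proof -
  define z where "z \<theta> = complex_of_real lam * exp (\<i> * complex_of_real \<theta>)" for \<theta>
  define W where "W \<theta> = (complex_of_real (ln lam) + \<i> * complex_of_real \<theta>) * (\<i> * complex_of_real lam * exp (\<i> * complex_of_real \<theta>))" for \<theta>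
  have Circ_eq: "Circ lam \<phi> = integral {0..2*pi} (\<lambda>\<theta>. \<phi> (z \<theta>) * W \<theta>)" for \<phi>
    unfolding Circ_def z_def W_def by (simp add: mult.assoc)
  have cz: "continuous_on {0..2*pi} z" unfolding z_def by (intro continuous_intros)
  have cW: "continuous_on {0..2*pi} W" unfolding W_def by (intro continuous_intros)
  have zS: "z ` {0..2*pi} \<subseteq> S" using lam by (auto intro!: circ simp: z_def norm_mult)
  have icirc: "(\<lambda>\<theta>. h (z \<theta>) * W \<theta>) integrable_on {0..2*pi}" if "continuous_on S h" for h
    by (intro integrable_continuous_interval continuous_on_mult cW continuous_on_compose2[OF that cz zS])
  have "Circ lam (\<lambda>t. f t - (\<Sum>N\<in>A. c N * g N t)) =
      integral {0..2*pi} (\<lambda>\<theta>. f (z \<theta>) * W \<theta> - (\<Sum>N\<in>A. c N * (g N (z \<theta>) * W \<theta>)))"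
    unfolding Circ_eq by (simp add: algebra_simps sum_distrib_left sum_distrib_right)
  also have "\<dots> = Circ lam f - (\<Sum>N\<in>A. c N * Circ lam (g N))"
    unfolding Circ_eq by (rule integral_lin[OF A icirc[OF cf] icirc[OF cg]])
  finally have 1: "Circ lam (\<lambda>t. f t - (\<Sum>N\<in>A. c N * g N t)) = Circ lam f - (\<Sum>N\<in>A. c N * Circ lam (g N))" .
  have 2: "integral {lam..} (\<lambda>x. f (of_real x) - (\<Sum>N\<in>A. c N * g N (of_real x))) =
      integral {lam..} (\<lambda>x. f (of_real x)) - (\<Sum>N\<in>A. c N * integral {lam..} (\<lambda>x. g N (of_real x)))"
    by (rule integral_lin[OF A intf intg])
  show ?thesis unfolding Hk_def 1 2
    by (simp add: algebra_simps sum_distrib_left sum.distrib sum_subtractf)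
qed

lemma Psi_near0:
  assumes pw: "\<forall>\<omega>\<in>set \<omega>s. 0 < Re \<omega>" and pa: "\<forall>\<omega>\<in>set \<alpha>s. 0 < Re \<omega>"
  shows "\<exists>d K. d > 0 \<and> (\<forall>t. t \<noteq> 0 \<and> norm t < d \<longrightarrow> norm (Psi \<omega>s \<alpha>s k a t) \<le> K)"
proof -
  have nz: "\<forall>\<omega>\<in>set \<omega>s. \<omega> \<noteq> 0" "\<forall>\<omega>\<in>set \<alpha>s. \<omega> \<noteq> 0" using pw pa by force+
  obtain L where L: "(Psi \<omega>s \<alpha>s k a \<longlongrightarrow> L) (at 0)" using Psi_tendsto[OF nz] by blast
  have "eventually (\<lambda>t. dist (Psi \<omega>s \<alpha>s k a t) L < 1) (at 0)"
    using L by (rule tendstoD) simp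
  then obtain d where d: "d > 0" and dP: "\<And>t. t \<noteq> 0 \<Longrightarrow> dist t 0 < d \<Longrightarrow> dist (Psi \<omega>s \<alpha>s k a t) L < 1"
    unfolding eventually_at by blast
  have "norm (Psi \<omega>s \<alpha>s k a t) \<le> norm L + 1" if "t \<noteq> 0" "norm t < d" for t
    using dP[of t] that norm_triangle_ineq2[of "Psi \<omega>s \<alpha>s k a t" L] by (simp add: dist_norm)
  thus ?thesis using d by blast
qed

lemma psi_holo: "psi \<omega>s \<alpha>s k a w holomorphic_on Sdom (\<omega>s @ \<alpha>s)"
  unfolding psi_def[abs_def]
  by (intro holomorphic_intros mb_F_holo) auto

lemma main_bound:
  assumes pw: "\<forall>\<omega>\<in>set \<omega>s. 0 < Re \<omega>" and pa: "\<forall>\<alpha>\<in>set \<alpha>s. 0 < Re \<alpha>"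
    and adm1: "admissible_radius lam1 (\<omega>s @ \<alpha>s)" and adm2: "admissible_radius lam2 \<omega>s"
  shows "\<exists>M T. M \<ge> 0 \<and> T \<ge> 0 \<and> (\<forall>w. Re w > 2 * T \<longrightarrow>
     norm (mb_P lam1 (\<omega>s @ \<alpha>s) k (w + a)
             - (\<Sum>N\<in>{- int (length \<alpha>s) .. int (length \<omega>s) + k}.
                   mb_a \<alpha>s N a * mb_P lam2 \<omega>s (k - N) w)) \<le> M / (Re w - T))"
proof -
  define \<omega>\<alpha> where "\<omega>\<alpha> = \<omega>s @ \<alpha>s"
  have pwa: "\<forall>\<omega>\<in>set \<omega>\<alpha>. 0 < Re \<omega>" using pw pa by (auto simp: \<omega>\<alpha>_def)
  have nz: "\<forall>\<omega>\<in>set \<omega>s. \<omega> \<noteq> 0" "\<forall>\<omega>\<in>set \<alpha>s. \<omega> \<noteq> 0" using pw pa by force+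
  obtain M c where c0: "c \<ge> 0" and Mc: "\<And>x. x > 0 \<Longrightarrow> norm (Psi \<omega>s \<alpha>s k a (complex_of_real x)) \<le> M * exp (c * x)"
    using Psi_real_bound[OF pw pa, of k a] by blast
  have M0: "M \<ge> 0" using Mc[of 1] by (smt (verit, best) exp_gt_zero norm_ge_zero zero_le_mult_iff)
  obtain d K where d: "d > 0" and dK: "\<And>t. t \<noteq> 0 \<Longrightarrow> norm t < d \<Longrightarrow> norm (Psi \<omega>s \<alpha>s k a t) \<le> K"
    using Psi_near0[OF pw pa, of k a] by blast
  define T :: real where "T = c + norm a + of_int (2 * \<bar>k\<bar> + int (length \<alpha>s) + int (length \<omega>s)) + 3"
  have Tdef: "T = c + norm a + 2 * \<bar>real_of_int k\<bar> + real (length \<alpha>s) + real (length \<omega>s) + 3"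
    by (simp add: T_def)
  have na: "norm a \<ge> 0" by simp
  have T0: "T \<ge> 0" using c0 unfolding Tdef by simp
  have cT: "c \<le> T" unfolding Tdef by (smt (verit) of_nat_0_le_iff norm_ge_zero abs_ge_zero)
  define lam0 where "lam0 = min lam1 lam2"
  have l1: "lam1 > 0" "\<forall>\<omega>\<in>set \<omega>\<alpha>. lam1 < norm (2 * complex_of_real pi / \<omega>)"
    using adm1 by (auto simp: admissible_radius_def \<omega>\<alpha>_def)
  have l2: "lam2 > 0" "\<forall>\<omega>\<in>set \<omega>s. lam2 < norm (2 * complex_of_real pi / \<omega>)"
    using adm2 by (auto simp: admissible_radius_def)
  have l0: "lam0 > 0" "lam0 \<le> lam1" "lam0 \<le> lam2" using l1 l2 by (auto simp: lam0_def)
  have in1: "t \<in> Sdom \<omega>\<alpha>" if "t \<noteq> 0" "norm t \<le> lam1" for t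
    using that l1 by (intro small_in_Sdom pwa) auto
  have in2: "t \<in> Sdom \<omega>s" if "t \<noteq> 0" "norm t \<le> lam2" for t
    using that l2 by (intro small_in_Sdom pw) auto
  have bound: "norm (mb_P lam1 \<omega>\<alpha> k (w + a)
             - (\<Sum>N\<in>Nset \<omega>s \<alpha>s k. mb_a \<alpha>s N a * mb_P lam2 \<omega>s (k - N) w)) \<le> M / (Re w - T)"
    if w: "Re w > 2 * T" for w
  proof -
    define F1 where "F1 = mb_F \<omega>\<alpha> k (w + a)"
    define F2 where "F2 N = mb_F \<omega>s (k - N) w" for N
    have NR: "of_int \<bar>k - N + 1\<bar> + 1 < Re w" if "N \<in> Nset \<omega>s \<alpha>s k" for N
    proof -
      have "\<bar>k - N + 1\<bar> \<le> 2 * \<bar>k\<bar> + int (length \<alpha>s) + int (length \<omega>s) + 1"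
        using that by (auto simp: Nset_def)
      hence "of_int \<bar>k - N + 1\<bar> \<le> real_of_int (2 * \<bar>k\<bar> + int (length \<alpha>s) + int (length \<omega>s)) + 1"
        by linarith
      thus ?thesis using w c0 T0 na unfolding Tdef
        by simp (use norm_ge_zero[of a] abs_ge_zero[of "real_of_int k"] in linarith)
    qed
    have R1: "of_int \<bar>k + 1\<bar> + 1 < Re (w + a)"
    proof -
      have "- norm a \<le> Re a" using abs_Re_le_cmod[of a] by linarith
      moreover have "of_int \<bar>k + 1\<bar> \<le> real_of_int (2 * \<bar>k\<bar> + int (length \<alpha>s) + int (length \<omega>s)) + 1"
        by linarith
      ultimately show ?thesis using w c0 T0 na unfolding Tdef
        by simp (use norm_ge_zero[of a] abs_ge_zero[of "real_of_int k"] in linarith)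
    qed
    have P1: "mb_P lam1 \<omega>\<alpha> k (w + a) = Hk lam0 F1 / (2 * pi * \<i>) + (euler_mascheroni - pi * \<i>) * mb_a \<omega>\<alpha> k (w + a)"
    proof -
      have "Hk lam0 F1 = Hk lam1 F1" unfolding F1_def
      proof (rule hankel_indep[OF mb_F_holo open_Sdom])
        show "t \<in> Sdom \<omega>\<alpha>" if "lam0 \<le> norm t" "norm t \<le> lam1" for t
          using that l0 by (intro in1) auto
        show "(\<lambda>x. mb_F \<omega>\<alpha> k (w + a) (of_real x)) integrable_on {c'..}" if "c' > 0" for c'
          using F_int(1)[OF pwa that R1] .
      qed (use l0 pwa in \<open>auto intro: pos_in_Sdom\<close>)
      thus ?thesis using mb_P_Hk[OF pwa l1(1) R1] by (simp add: F1_def)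
    qed
    have P2: "mb_P lam2 \<omega>s (k - N) w = Hk lam0 (F2 N) / (2 * pi * \<i>) + (euler_mascheroni - pi * \<i>) * mb_a \<omega>s (k - N) w"
      if N: "N \<in> Nset \<omega>s \<alpha>s k" for N
    proof -
      have R2: "of_int \<bar>k - N + 1\<bar> + 1 < Re w" using NR[OF N] .
      have "Hk lam0 (F2 N) = Hk lam2 (F2 N)" unfolding F2_def
      proof (rule hankel_indep[OF mb_F_holo open_Sdom])
        show "t \<in> Sdom \<omega>s" if "lam0 \<le> norm t" "norm t \<le> lam2" for t
          using that l0 by (intro in2) auto
        show "(\<lambda>x. mb_F \<omega>s (k - N) w (of_real x)) integrable_on {c'..}" if "c' > 0" for c'
          using F_int(1)[OF pw that R2] .
      qed (use l0 pw in \<open>auto intro: pos_in_Sdom\<close>)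
      thus ?thesis using mb_P_Hk[OF pw l2(1) R2] by (simp add: F2_def)
    qed
    have lin: "Hk lam0 (psi \<omega>s \<alpha>s k a w) = Hk lam0 F1 - (\<Sum>N\<in>Nset \<omega>s \<alpha>s k. mb_a \<alpha>s N a * Hk lam0 (F2 N))"
      unfolding psi_def[abs_def] F1_def[symmetric] \<omega>\<alpha>_def[symmetric] F2_def[symmetric]
    proof (rule Hk_lin[where S = "Sdom \<omega>\<alpha>"])
      show "finite (Nset \<omega>s \<alpha>s k)" by (simp add: Nset_def)
      show "continuous_on (Sdom \<omega>\<alpha>) F1" unfolding F1_def
        by (rule holomorphic_on_imp_continuous_on[OF mb_F_holo]) simp
      show "continuous_on (Sdom \<omega>\<alpha>) (F2 N)" for N unfolding F2_def
        by (rule holomorphic_on_imp_continuous_on[OF mb_F_holo]) (simp add: \<omega>\<alpha>_def)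
      show "t \<in> Sdom \<omega>\<alpha>" if "norm t = lam0" for t using that l0 by (intro in1) auto
      show "(\<lambda>x. F1 (of_real x)) integrable_on {lam0..}" unfolding F1_def
        using F_int(1)[OF pwa l0(1) R1] .
      show "(\<lambda>x. F2 N (of_real x)) integrable_on {lam0..}" if "N \<in> Nset \<omega>s \<alpha>s k" for N
        unfolding F2_def using F_int(1)[OF pw l0(1) NR[OF that]] .
    qed (use l0 in auto)
    have conv': "mb_a \<omega>\<alpha> k (w + a) = (\<Sum>N\<in>Nset \<omega>s \<alpha>s k. mb_a \<alpha>s N a * mb_a \<omega>s (k - N) w)"
      unfolding \<omega>\<alpha>_def Nset_def by (rule conv[OF nz])
    have eq: "mb_P lam1 \<omega>\<alpha> k (w + a) - (\<Sum>N\<in>Nset \<omega>s \<alpha>s k. mb_a \<alpha>s N a * mb_P lam2 \<omega>s (k - N) w)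
        = Hk lam0 (psi \<omega>s \<alpha>s k a w) / (2 * pi * \<i>)"
    proof -
      have "(\<Sum>N\<in>Nset \<omega>s \<alpha>s k. mb_a \<alpha>s N a * mb_P lam2 \<omega>s (k - N) w)
          = (\<Sum>N\<in>Nset \<omega>s \<alpha>s k. mb_a \<alpha>s N a * Hk lam0 (F2 N)) / (2 * pi * \<i>)
            + (euler_mascheroni - pi * \<i>) * (\<Sum>N\<in>Nset \<omega>s \<alpha>s k. mb_a \<alpha>s N a * mb_a \<omega>s (k - N) w)"
      proof -
        have "(\<Sum>N\<in>Nset \<omega>s \<alpha>s k. mb_a \<alpha>s N a * mb_P lam2 \<omega>s (k - N) w)
            = (\<Sum>N\<in>Nset \<omega>s \<alpha>s k. mb_a \<alpha>s N a * Hk lam0 (F2 N) / (2 * pi * \<i>)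
                 + (euler_mascheroni - pi * \<i>) * (mb_a \<alpha>s N a * mb_a \<omega>s (k - N) w))"
          by (intro sum.cong refl) (simp add: P2 algebra_simps)
        also have "\<dots> = (\<Sum>N\<in>Nset \<omega>s \<alpha>s k. mb_a \<alpha>s N a * Hk lam0 (F2 N) / (2 * pi * \<i>))
                 + (\<Sum>N\<in>Nset \<omega>s \<alpha>s k. (euler_mascheroni - pi * \<i>) * (mb_a \<alpha>s N a * mb_a \<omega>s (k - N) w))"
          by (rule sum.distrib)
        finally show ?thesis by (simp only: sum_divide_distrib sum_distrib_left)
      qed
      thus ?thesis unfolding P1 lin conv' by (simp add: diff_divide_distrib)
    qed
    have Hb: "norm (Hk lam0 (psi \<omega>s \<alpha>s k a w)) \<le> 2 * pi * (M / (Re w - T))"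
    proof (rule hankel_bound[OF psi_holo open_Sdom l0(1)])
      show "t \<in> Sdom (\<omega>s @ \<alpha>s)" if "0 < norm t" "norm t \<le> lam0" for t
        using that l0 in1 by (auto simp: \<omega>\<alpha>_def)
      show "complex_of_real x \<in> Sdom (\<omega>s @ \<alpha>s)" if "x > 0" for x
        using pos_in_Sdom[OF pwa that] by (simp add: \<omega>\<alpha>_def)
      show "(\<lambda>x. psi \<omega>s \<alpha>s k a w (of_real x)) integrable_on {c'..}" if "c' > 0" for c'
        unfolding psi_def
        by (intro integrable_diff integrable_sum integrable_on_mult_right F_int(1)[OF pwa that R1, unfolded \<omega>\<alpha>_def]
              F_int(1)[OF pw that NR] finite_atLeastAtMost_int) (simp_all add: Nset_def)
      show "d > 0" by fact
      show "norm (psi \<omega>s \<alpha>s k a w t) \<le> exp (norm w * d) * K" if "0 < norm t" "norm t < d" for t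
      proof -
        have "norm (exp (- w * t)) = exp (Re (- w * t))" by (simp add: norm_exp_eq_Re)
        also have "\<dots> \<le> exp (norm w * d)"
        proof -
          have "Re (- w * t) \<le> norm (- w * t)" by (rule complex_Re_le_cmod)
          also have "\<dots> \<le> norm w * d" using that by (simp add: norm_mult mult_left_mono)
          finally show ?thesis by simp
        qed
        finally have "norm (exp (- w * t)) \<le> exp (norm w * d)" .
        moreover have "norm (Psi \<omega>s \<alpha>s k a t) \<le> K" using that by (intro dK) auto
        ultimately show ?thesis using that psi_eq[of t] by (auto simp: norm_mult intro!: mult_mono)
      qed
      show "norm (integral {mu..} (\<lambda>x. psi \<omega>s \<alpha>s k a w (of_real x))) \<le> M / (Re w - T)"
        if mu: "0 < mu" "mu \<le> lam0" for mu
      proof -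
        have b: "Re w - c > 0" using w c0 T0 na abs_ge_zero[of "real_of_int k"] unfolding Tdef by (smt (verit) of_nat_0_le_iff)
        have cont: "continuous_on {mu..} (\<lambda>x. psi \<omega>s \<alpha>s k a w (of_real x))"
        proof -
          have "continuous_on (Sdom (\<omega>s @ \<alpha>s)) (psi \<omega>s \<alpha>s k a w)"
            using psi_holo holomorphic_on_imp_continuous_on by blast
          moreover have "continuous_on {mu..} (\<lambda>x::real. complex_of_real x)" by (intro continuous_intros)
          moreover have "complex_of_real ` {mu..} \<subseteq> Sdom (\<omega>s @ \<alpha>s)"
            using pwa mu by (auto intro!: pos_in_Sdom simp: \<omega>\<alpha>_def)
          ultimately show ?thesis by (rule continuous_on_compose2)
        qed
        have bd: "norm (psi \<omega>s \<alpha>s k a w (of_real x)) \<le> M * exp (- (Re w - c) * x)" if x: "x \<ge> mu" for x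
        proof -
          have xp: "x > 0" using x mu by simp
          have "norm (psi \<omega>s \<alpha>s k a w (of_real x)) = exp (- Re w * x) * norm (Psi \<omega>s \<alpha>s k a (of_real x))"
            using psi_eq[of "complex_of_real x"] xp by (simp add: norm_mult norm_exp_eq_Re)
          also have "\<dots> \<le> exp (- Re w * x) * (M * exp (c * x))"
            by (intro mult_left_mono Mc xp) auto
          also have "\<dots> = M * exp (- (Re w - c) * x)" by (simp add: algebra_simps flip: exp_add)
          finally show ?thesis .
        qed
        have "norm (integral {mu..} (\<lambda>x. psi \<omega>s \<alpha>s k a w (of_real x))) \<le> M * exp (- (Re w - c) * mu) / (Re w - c)"
          by (rule int_exp_bound(2)[OF cont b bd])
        also have "\<dots> \<le> M / (Re w - c)"
        proof -
          have "exp (- (Re w - c) * mu) \<le> 1" using b mu by (simp add: mult_nonpos_nonneg)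
          thus ?thesis using M0 b by (intro divide_right_mono) (auto intro: mult_left_le)
        qed
        also have "\<dots> \<le> M / (Re w - T)"
          using M0 b w T0 cT by (intro divide_left_mono mult_pos_pos) auto
        finally show ?thesis .
      qed
    qed
    show ?thesis unfolding eq using Hb pi_gt_zero by (simp add: norm_divide norm_mult field_simps)
  qed
  show ?thesis using bound M0 T0 by (auto simp: Nset_def \<omega>\<alpha>_def)
qed

lemma sector_Re:
  assumes "w \<in> sector \<delta>" "0 < \<delta>"
  shows "Re w \<ge> sin \<delta> * norm w"
proof -
  have w: "w \<noteq> 0" "\<bar>Arg w\<bar> \<le> pi / 2 - \<delta>" using assms by (auto simp: sector_def)
  have "cos (pi / 2 - \<delta>) \<le> cos \<bar>Arg w\<bar>"
    using w assms by (intro cos_monotone_0_pi_le) auto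
  moreover have "cos \<bar>Arg w\<bar> = cos (Arg w)" by (simp add: abs_if)
  moreover have "cos (pi / 2 - \<delta>) = sin \<delta>" by (simp add: cos_diff)
  ultimately have "sin \<delta> \<le> Re w / norm w" using cos_Arg[OF w(1)] by simp
  thus ?thesis using w(1) by (simp add: field_simps)
qed

theorem theorem1p1:
  fixes \<omega>s \<alpha>s :: "complex list" and a :: complex and k :: int
    and \<delta> lam1 lam2 :: real
  assumes "\<forall>\<omega>\<in>set \<omega>s. 0 < Re \<omega>"
    and "\<forall>\<alpha>\<in>set \<alpha>s. 0 < Re \<alpha>"
    and "k \<ge> - int (length \<omega>s + length \<alpha>s)"
    and "\<delta> > 0"
    and "admissible_radius lam1 (\<omega>s @ \<alpha>s)"
    and "admissible_radius lam2 \<omega>s"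
  shows "(\<lambda>w. mb_P lam1 (\<omega>s @ \<alpha>s) k (w + a)
             - (\<Sum>N\<in>{- int (length \<alpha>s) .. int (length \<omega>s) + k}.
                   mb_a \<alpha>s N a * mb_P lam2 \<omega>s (k - N) w))
         \<in> O[inf at_infinity (principal (sector \<delta>))](\<lambda>w. 1 / w)"
proof -
  obtain M T where M0: "M \<ge> 0" and T0: "T \<ge> 0" and MT: "\<And>w. Re w > 2 * T \<Longrightarrow>
     norm (mb_P lam1 (\<omega>s @ \<alpha>s) k (w + a)
             - (\<Sum>N\<in>{- int (length \<alpha>s) .. int (length \<omega>s) + k}.
                   mb_a \<alpha>s N a * mb_P lam2 \<omega>s (k - N) w)) \<le> M / (Re w - T)"
    using main_bound[OF assms(1,2,5,6), of k a] by blast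
  show ?thesis
  proof (cases "\<delta> > pi / 2")
    case True
    have "sector \<delta> = {}" using True by (auto simp: sector_def)
    thus ?thesis by (intro bigoI[of _ 0]) (simp add: eventually_inf_principal)
  next
    case False
    define s where "s = sin \<delta>"
    have s: "s > 0" unfolding s_def using False assms(4) by (intro sin_gt_zero) auto
    show ?thesis
    proof (rule bigoI[of _ "2 * M / s"])
      have "eventually (\<lambda>w::complex. norm w \<ge> (2 * T + 1) / s) at_infinity"
        by (rule eventually_at_infinity[THEN iffD2]) blast
      thus "eventually (\<lambda>w. norm (mb_P lam1 (\<omega>s @ \<alpha>s) k (w + a)
             - (\<Sum>N\<in>{- int (length \<alpha>s) .. int (length \<omega>s) + k}.
                   mb_a \<alpha>s N a * mb_P lam2 \<omega>s (k - N) w)) \<le> 2 * M / s * norm (1 / w))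
           (inf at_infinity (principal (sector \<delta>)))"
        unfolding eventually_inf_principal
      proof (rule eventually_mono, safe)
        fix w :: complex assume nw: "norm w \<ge> (2 * T + 1) / s" and ws: "w \<in> sector \<delta>"
        have re: "Re w \<ge> s * norm w" using sector_Re[OF ws assms(4)] by (simp add: s_def)
        have "s * norm w \<ge> 2 * T + 1" using nw s by (simp add: field_simps)
        hence re2: "Re w \<ge> 2 * T + 1" using re by simp
        have w0: "w \<noteq> 0" using ws by (simp add: sector_def)
        have "norm (mb_P lam1 (\<omega>s @ \<alpha>s) k (w + a)
             - (\<Sum>N\<in>{- int (length \<alpha>s) .. int (length \<omega>s) + k}.
                   mb_a \<alpha>s N a * mb_P lam2 \<omega>s (k - N) w)) \<le> M / (Re w - T)"
          using re2 by (intro MT) linarith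
        also have "\<dots> \<le> M / (Re w / 2)"
          using re2 T0 M0 by (intro divide_left_mono mult_pos_pos) auto
        also have "\<dots> \<le> M / (s * norm w / 2)"
          using re2 T0 M0 re s w0 by (intro divide_left_mono mult_pos_pos) auto
        also have "\<dots> = 2 * M / s * norm (1 / w)"
          using s w0 by (simp add: norm_divide field_simps)
        finally show "norm (mb_P lam1 (\<omega>s @ \<alpha>s) k (w + a)
             - (\<Sum>N\<in>{- int (length \<alpha>s) .. int (length \<omega>s) + k}.
                   mb_a \<alpha>s N a * mb_P lam2 \<omega>s (k - N) w)) \<le> 2 * M / s * norm (1 / w)" .
      qed
    qed
  qed
qed

end
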